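(* Let $p,l$ be distinct odd primes and let $\Gamma$, $\Gamma_p$, $\Gamma_l$ be as in the context. Let $a\in\Gamma_p\setminus\{1\}$ and $b\in\Gamma_l\setminus\{1\}$. Then either $\langle a,b\rangle\cong\mathbb Z^2$ or $\langle a,b\rangle$ contains a free subgroup of rank $2$.
   Context: Let $p,l$ be distinct odd primes. Let $\mathbb H(\mathbb Z)$ be the ring of quaternions $x=x_0+x_1i+x_2j+x_3k$ with $x_0,\dots,x_3\in\mathbb Z$, where $i^2=j^2=k^2=-1$, $ij=-ji=k$; write $|x|^2=x_0^2+x_1^2+x_2^2+x_3^2$. Fix $c_p,d_p\in\mathbb Q_p$ with $c_p^2+d_p^2+1=0$ and $c_l,d_l\in\mathbb Q_l$ with $c_l^2+d_l^2+1=0$. Define $\psi:\mathbb H(\mathbb Z)\setminus\{0\}\to G:=PGL_2(\mathbb Q_p)\times PGL_2(\mathbb Q_l)$ by sending $x$ to the class of the pair $\left(\begin{pmatrix} x_0+x_1c_p+x_3d_p & -x_1d_p+x_2+x_3c_p\\ -x_1d_p-x_2+x_3c_p & x_0-x_1c_p-x_3d_p\end{pmatrix},\begin{pmatrix} x_0+x_1c_l+x_3d_l & -x_1d_l+x_2+x_3c_l\\ -x_1d_l-x_2+x_3c_l & x_0-x_1c_l-x_3d_l\end{pmatrix}\right)$. Let $\tilde\Gamma$ be the set of $x\in\mathbb H(\mathbb Z)$ such that $|x|^2=p^rl^s$ for some integers $r,s\ge 0$, and such that $x_0$ is odd and $x_1,x_2,x_3$ are even if $|x|^2\equiv 1\pmod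 4$, while $x_1$ is even and $x_0,x_2,x_3$ are odd if $|x|^2\equiv 3\pmod 4$. Then $\Gamma=\psi(\tilde\Gamma)$ is a torsion-free cocompact lattice in $G$. Let $\tilde A=\{x\in\tilde\Gamma: x_0>0,\ |x|^2=p\}$ and $\tilde B=\{y\in\tilde\Gamma: y_0>0,\ |y|^2=l\}$; $\Gamma_p$ (resp. $\Gamma_l$) is the subgroup of $\Gamma$ generated by $\psi(\tilde A)$ (resp. $\psi(\tilde B)$). These are free groups of ranks $(p+1)/2$ and $(l+1)/2$, and together they generate $\Gamma$. *)

theory Defs
  imports "HOL-Algebra.Algebra"
begin

text \<open>Integral quaternions x0 + x1 i + x2 j + x3 k, with i^2 = j^2 = k^2 = -1, ij = -ji = k.\<close>

datatype hq = HQ (q0: int) (q1: int) (q2: int) (q3: int)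

definition qmult :: "hq \<Rightarrow> hq \<Rightarrow> hq" where
  "qmult x y = HQ
     (q0 x * q0 y - q1 x * q1 y - q2 x * q2 y - q3 x * q3 y)
     (q0 x * q1 y + q1 x * q0 y + q2 x * q3 y - q3 x * q2 y)
     (q0 x * q2 y - q1 x * q3 y + q2 x * q0 y + q3 x * q1 y)
     (q0 x * q3 y + q1 x * q2 y - q2 x * q1 y + q3 x * q0 y)"

definition qone :: hq where "qone = HQ 1 0 0 0"

definition qscale :: "int \<Rightarrow> hq \<Rightarrow> hq" where
  "qscale m x = HQ (m * q0 x) (m * q1 x) (m * q2 x) (m * q3 x)"

definition qnorm :: "hq \<Rightarrow> int" where
  "qnorm x = (q0 x)^2 + (q1 x)^2 + (q2 x)^2 + (q3 x)^2"

definition Gamma_tilde :: "int \<Rightarrow> int \<Rightarrow> hq set" where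
  "Gamma_tilde p l = {x. (\<exists>r s::nat. qnorm x = p ^ r * l ^ s) \<and>
      (qnorm x mod 4 = 1 \<longrightarrow> odd (q0 x) \<and> even (q1 x) \<and> even (q2 x) \<and> even (q3 x)) \<and>
      (qnorm x mod 4 = 3 \<longrightarrow> even (q1 x) \<and> odd (q0 x) \<and> odd (q2 x) \<and> odd (q3 x))}"

text \<open>Two elements of \<open>\<Gamma>~\<close> have the same image under \<open>\<psi>\<close> iff they are proportional
  by a nonzero rational scalar (\<open>\<psi>\<close> extends to an injective algebra homomorphism
  H(Q) \<rightarrow> M_2(Q_p), and PGL_2 is GL_2 modulo scalars).  We represent \<open>\<psi>(x)\<close> by this
  class of \<open>x\<close>.\<close>
definition psi_class :: "int \<Rightarrow> int \<Rightarrow> hq \<Rightarrow> hq set" where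
  "psi_class p l x = {y \<in> Gamma_tilde p l.
      \<exists>m n::int. m \<noteq> 0 \<and> n \<noteq> 0 \<and> qscale m x = qscale n y}"

text \<open>The lattice \<open>\<Gamma> = \<psi>(\<Gamma>~)\<close> as an abstract group (multiplication induced by
  quaternion multiplication, i.e. by matrix multiplication under \<psi>).\<close>
definition Gamma_grp :: "int \<Rightarrow> int \<Rightarrow> hq set monoid" where
  "Gamma_grp p l = \<lparr> carrier = psi_class p l ` Gamma_tilde p l,
      monoid.mult = (\<lambda>A B. psi_class p l (qmult (SOME x. x \<in> A) (SOME y. y \<in> B))),
      one = psi_class p l qone \<rparr>"

definition A_tilde :: "int \<Rightarrow> int \<Rightarrow> hq set" where
  "A_tilde p l = {x \<in> Gamma_tilde p l. q0 x > 0 \<and> qnorm x = p}"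

definition B_tilde :: "int \<Rightarrow> int \<Rightarrow> hq set" where
  "B_tilde p l = {y \<in> Gamma_tilde p l. q0 y > 0 \<and> qnorm y = l}"

definition Gamma_p :: "int \<Rightarrow> int \<Rightarrow> hq set set" where
  "Gamma_p p l = generate (Gamma_grp p l) (psi_class p l ` A_tilde p l)"

definition Gamma_l :: "int \<Rightarrow> int \<Rightarrow> hq set set" where
  "Gamma_l p l = generate (Gamma_grp p l) (psi_class p l ` B_tilde p l)"

text \<open>A letter is a pair
  (generator: True = u, False = v; exponent: True = +1, False = -1).\<close>
definition letter_val :: "('a, 'b) monoid_scheme \<Rightarrow> 'a \<Rightarrow> 'a \<Rightarrow> bool \<times> bool \<Rightarrow> 'a" where
  "letter_val G u v c = (let g = (if fst c then u else v) in if snd c then g else inv\<^bsub>G\<^esub> g)"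

definition word_val :: "('a, 'b) monoid_scheme \<Rightarrow> 'a \<Rightarrow> 'a \<Rightarrow> (bool \<times> bool) list \<Rightarrow> 'a" where
  "word_val G u v w = foldr (\<lambda>c acc. letter_val G u v c \<otimes>\<^bsub>G\<^esub> acc) w \<one>\<^bsub>G\<^esub>"

definition reduced_word :: "(bool \<times> bool) list \<Rightarrow> bool" where
  "reduced_word w = successively (\<lambda>c d. \<not> (fst c = fst d \<and> snd c \<noteq> snd d)) w"

definition free_pair :: "('a, 'b) monoid_scheme \<Rightarrow> 'a \<Rightarrow> 'a \<Rightarrow> bool" where
  "free_pair G u v \<longleftrightarrow> (\<forall>w. w \<noteq> [] \<and> reduced_word w \<longrightarrow> word_val G u v w \<noteq> \<one>\<^bsub>G\<^esub>)"

definition contains_free_rank2 :: "('a, 'b) monoid_scheme \<Rightarrow> 'a set \<Rightarrow> bool" where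
  "contains_free_rank2 G H \<longleftrightarrow> (\<exists>u \<in> H. \<exists>v \<in> H. free_pair G u v)"

end

theory Submission
  imports Defs "HOL-Computational_Algebra.Primes"
begin


instantiation hq :: ring_1
begin
definition "zero_hq = HQ 0 0 0 0"
definition "one_hq = HQ 1 0 0 0"
definition "plus_hq x y = HQ (q0 x + q0 y) (q1 x + q1 y) (q2 x + q2 y) (q3 x + q3 y)"
definition "minus_hq x y = HQ (q0 x - q0 y) (q1 x - q1 y) (q2 x - q2 y) (q3 x - q3 y)"
definition "uminus_hq x = HQ (- q0 x) (- q1 x) (- q2 x) (- q3 x)"
definition "times_hq x y = qmult x y"
instance
  by standard (auto simp: zero_hq_def one_hq_def plus_hq_def minus_hq_def uminus_hq_def times_hq_def
      qmult_def algebra_simps intro: hq.expand)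
end

lemma hq_eq_iff: "x = y \<longleftrightarrow> q0 x = q0 y \<and> q1 x = q1 y \<and> q2 x = q2 y \<and> q3 x = q3 y"
  by (auto intro: hq.expand)

lemma hq_sel_simps[simp]:
  "q0 0 = 0" "q1 0 = 0" "q2 0 = 0" "q3 0 = 0"
  "q0 1 = 1" "q1 1 = 0" "q2 1 = 0" "q3 1 = 0"
  "q0 (x + y) = q0 x + q0 y" "q1 (x + y) = q1 x + q1 y" "q2 (x + y) = q2 x + q2 y" "q3 (x + y) = q3 x + q3 y"
  "q0 (x - y) = q0 x - q0 y" "q1 (x - y) = q1 x - q1 y" "q2 (x - y) = q2 x - q2 y" "q3 (x - y) = q3 x - q3 y"
  "q0 (- x) = - q0 x" "q1 (- x) = - q1 x" "q2 (- x) = - q2 x" "q3 (- x) = - q3 x"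
  by (simp_all add: zero_hq_def one_hq_def plus_hq_def minus_hq_def uminus_hq_def)

lemma hq_mult_sel[simp]:
  "q0 (x * y) = q0 x * q0 y - q1 x * q1 y - q2 x * q2 y - q3 x * q3 y"
  "q1 (x * y) = q0 x * q1 y + q1 x * q0 y + q2 x * q3 y - q3 x * q2 y"
  "q2 (x * y) = q0 x * q2 y - q1 x * q3 y + q2 x * q0 y + q3 x * q1 y"
  "q3 (x * y) = q0 x * q3 y + q1 x * q2 y - q2 x * q1 y + q3 x * q0 y"
  by (simp_all add: times_hq_def qmult_def)

lemma qmult_eq: "qmult x y = x * y" by (simp add: times_hq_def)
lemma qone_eq: "qone = 1" by (simp add: qone_def one_hq_def)

lemma of_nat_sel: "q0 (of_nat n :: hq) = int n \<and> q1 (of_nat n :: hq) = 0 \<and> q2 (of_nat n :: hq) = 0 \<and> q3 (of_nat n :: hq) = 0"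
  by (induct n) auto

lemma of_int_sel[simp]: "q0 (of_int m :: hq) = m" "q1 (of_int m :: hq) = 0" "q2 (of_int m :: hq) = 0" "q3 (of_int m :: hq) = 0"
  by (cases m rule: int_cases; simp add: of_nat_sel)+

lemma of_int_hq: "(of_int m :: hq) = HQ m 0 0 0"
  by (simp add: hq_eq_iff)

lemma qscale_eq: "qscale m x = of_int m * x"
  by (simp add: qscale_def hq_eq_iff)

lemma of_int_commute: "(of_int m :: hq) * x = x * of_int m"
  by (simp add: hq_eq_iff algebra_simps)

definition qconj :: "hq \<Rightarrow> hq" where "qconj x = HQ (q0 x) (- q1 x) (- q2 x) (- q3 x)"

lemma qconj_sel[simp]: "q0 (qconj x) = q0 x" "q1 (qconj x) = - q1 x" "q2 (qconj x) = - q2 x" "q3 (qconj x) = - q3 x"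
  by (simp_all add: qconj_def)

lemma qconj_mult: "qconj (x * y) = qconj y * qconj x"
  by (simp add: hq_eq_iff algebra_simps)
lemma qconj_qconj[simp]: "qconj (qconj x) = x" by (simp add: hq_eq_iff)
lemma qconj_one[simp]: "qconj 1 = 1" by (simp add: hq_eq_iff)
lemma qconj_of_int[simp]: "qconj (of_int m) = of_int m" by (simp add: hq_eq_iff)
lemma mult_qconj: "x * qconj x = of_int (qnorm x)"
  by (simp add: hq_eq_iff qnorm_def algebra_simps power2_eq_square)
lemma qconj_mult_self: "qconj x * x = of_int (qnorm x)"
  by (simp add: hq_eq_iff qnorm_def algebra_simps power2_eq_square)
lemma qnorm_mult: "qnorm (x * y) = qnorm x * qnorm y"
  by (simp add: qnorm_def algebra_simps power2_eq_square)
lemma qnorm_conj[simp]: "qnorm (qconj x) = qnorm x" by (simp add: qnorm_def)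
lemma qnorm_one[simp]: "qnorm 1 = 1" by (simp add: qnorm_def)
lemma qnorm_of_int[simp]: "qnorm (of_int m) = m^2" by (simp add: qnorm_def)
lemma qnorm_nonneg: "qnorm x \<ge> 0" by (simp add: qnorm_def)
lemma qnorm_zero_iff: "qnorm x = 0 \<longleftrightarrow> x = 0"
  by (auto simp: qnorm_def hq_eq_iff add_nonneg_eq_0_iff)
lemma qnorm_power: "qnorm (x ^ n) = qnorm x ^ n"
  by (induct n) (auto simp: qnorm_mult)
lemma qconj_power: "qconj (x ^ n) = qconj x ^ n"
proof (induct n)
  case (Suc n)
  have "qconj (x ^ Suc n) = qconj (x^n * x)" by (simp add: power_commutes)
  also have "\<dots> = qconj x * qconj x ^ n" by (simp add: qconj_mult Suc)
  finally show ?case by simp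
qed simp

lemma hq_no_zero_divisors: "x \<noteq> 0 \<Longrightarrow> y \<noteq> 0 \<Longrightarrow> (x * y :: hq) \<noteq> 0"
  by (metis qnorm_mult qnorm_zero_iff mult_eq_0_iff)



definition qdvd :: "int \<Rightarrow> hq \<Rightarrow> bool" where
  "qdvd d x \<longleftrightarrow> d dvd q0 x \<and> d dvd q1 x \<and> d dvd q2 x \<and> d dvd q3 x"

definition qg :: "hq \<Rightarrow> int" where
  "qg x = gcd (gcd (q0 x) (q1 x)) (gcd (q2 x) (q3 x))"

lemma dvd_qg_iff: "d dvd qg x \<longleftrightarrow> qdvd d x"
  by (simp add: qg_def qdvd_def)

lemma qg_eq_0_iff: "qg x = 0 \<longleftrightarrow> x = 0"
  by (auto simp: qg_def hq_eq_iff)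

lemma qdvd_iff_ex: "d \<noteq> 0 \<Longrightarrow> qdvd d x \<longleftrightarrow> (\<exists>y. x = of_int d * y)"
proof
  assume "d \<noteq> 0" "qdvd d x"
  then obtain a1 a2 a3 a4 where "q0 x = d*a1" "q1 x = d*a2" "q2 x = d*a3" "q3 x = d*a4"
    unfolding qdvd_def by (auto elim!: dvdE)
  then have "x = of_int d * HQ a1 a2 a3 a4" by (simp add: hq_eq_iff)
  then show "\<exists>y. x = of_int d * y" by blast
qed (auto simp: qdvd_def)

lemma qdvd_mult_right: "qdvd d x \<Longrightarrow> qdvd d (x * y)"
  by (simp add: qdvd_def)
lemma qdvd_mult_left: "qdvd d y \<Longrightarrow> qdvd d (x * y)"
  by (simp add: qdvd_def)
lemma qdvd_add: "qdvd d x \<Longrightarrow> qdvd d y \<Longrightarrow> qdvd d (x + y)"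
  by (simp add: qdvd_def)
lemma qdvd_of_int_mult: "qdvd d (of_int d * x)"
  by (simp add: qdvd_def)
lemma qdvd_conj: "qdvd d (qconj x) \<longleftrightarrow> qdvd d x"
  by (simp add: qdvd_def)

lemma qdvd_mult_mult: "qdvd d x \<Longrightarrow> qdvd e y \<Longrightarrow> qdvd (d*e) (x*y)"
  unfolding qdvd_def hq_mult_sel
  by (intro conjI dvd_add dvd_diff mult_dvd_mono; simp)

lemma qdvd_norm: "qdvd d x \<Longrightarrow> d^2 dvd qnorm x"
  unfolding qdvd_def qnorm_def power2_eq_square
  by (intro dvd_add mult_dvd_mono; simp)

lemma qdvd_of_int_cancel: "d \<noteq> 0 \<Longrightarrow> qdvd (d*e) (of_int d * x) \<longleftrightarrow> qdvd e x"
  by (simp add: qdvd_def)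

definition cnt :: "int \<Rightarrow> hq \<Rightarrow> nat" where "cnt p x = multiplicity p (qg x)"
definition vN :: "int \<Rightarrow> hq \<Rightarrow> nat" where "vN p x = multiplicity p (qnorm x)"
definition DD :: "int \<Rightarrow> hq \<Rightarrow> int" where "DD p x = int (vN p x) - 2 * int (cnt p x)"
definition GG :: "int \<Rightarrow> hq \<Rightarrow> hq \<Rightarrow> int" where
  "GG p x y = int (cnt p (x * y)) - int (cnt p x) - int (cnt p y)"
definition gp :: "int \<Rightarrow> hq \<Rightarrow> hq \<Rightarrow> int" where "gp p x y = GG p (qconj x) y"

context
  fixes p :: int
  assumes pp: "Factorial_Ring.prime p"
begin

lemma p_not_unit: "\<not> is_unit p" using pp by (meson not_prime_unit)
lemma p_nz: "p \<noteq> 0" using pp by auto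

lemma qdvd_pow_iff: "x \<noteq> 0 \<Longrightarrow> qdvd (p^n) x \<longleftrightarrow> n \<le> cnt p x"
  unfolding cnt_def dvd_qg_iff[symmetric]
  using power_dvd_iff_le_multiplicity[of "qg x" p n] p_not_unit qg_eq_0_iff by blast

lemma qdvd_cnt: "qdvd (p ^ cnt p x) x"
  unfolding cnt_def dvd_qg_iff[symmetric] by (rule multiplicity_dvd)

lemma cnt_decomp: assumes "x \<noteq> 0" obtains y where "x = of_int (p ^ cnt p x) * y" "\<not> qdvd p y"
proof -
  obtain y where y: "x = of_int (p ^ cnt p x) * y"
    using qdvd_cnt[of x] qdvd_iff_ex[of "p ^ cnt p x" x] p_nz by auto
  have "\<not> qdvd p y"
  proof
    assume "qdvd p y"
    then have "qdvd (p ^ cnt p x * p) x" using y qdvd_of_int_cancel[of "p ^ cnt p x" p y] p_nz by simp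
    then have "Suc (cnt p x) \<le> cnt p x" using qdvd_pow_iff[OF assms, of "Suc (cnt p x)"]
      by (simp add: mult.commute)
    then show False by simp
  qed
  with y that show ?thesis by blast
qed

lemma cnt_mult_ge: "x \<noteq> 0 \<Longrightarrow> y \<noteq> 0 \<Longrightarrow> cnt p x + cnt p y \<le> cnt p (x * y)"
proof -
  assume x: "x \<noteq> 0" and y: "y \<noteq> 0"
  have "qdvd (p ^ cnt p x * p ^ cnt p y) (x * y)"
    by (rule qdvd_mult_mult[OF qdvd_cnt qdvd_cnt])
  then have "qdvd (p ^ (cnt p x + cnt p y)) (x * y)" by (simp only: power_add)
  moreover have "x * y \<noteq> 0" using hq_no_zero_divisors x y by blast
  ultimately show ?thesis using qdvd_pow_iff by blast
qed

lemma gcd_int_mult_left': "gcd (m * a) (m * b) = \<bar>m\<bar> * gcd a (b::int)"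
  by (simp add: gcd_mult_left abs_mult)

lemma qg_of_int_mult: "qg (of_int m * x) = \<bar>m\<bar> * qg x"
proof -
  have "qg (of_int m * x) = gcd (gcd (m * q0 x) (m * q1 x)) (gcd (m * q2 x) (m * q3 x))"
    by (simp add: qg_def)
  also have "\<dots> = gcd (\<bar>m\<bar> * gcd (q0 x) (q1 x)) (\<bar>m\<bar> * gcd (q2 x) (q3 x))"
    by (simp only: gcd_int_mult_left')
  also have "\<dots> = \<bar>m\<bar> * qg x" by (simp only: gcd_int_mult_left' qg_def abs_abs)
  finally show ?thesis .
qed

lemma cnt_of_int_mult: "m \<noteq> 0 \<Longrightarrow> x \<noteq> 0 \<Longrightarrow> cnt p (of_int m * x) = multiplicity p m + cnt p x"
proof -
  assume m: "m \<noteq> 0" and x: "x \<noteq> 0"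
  have "cnt p (of_int m * x) = multiplicity p (\<bar>m\<bar> * qg x)" by (simp only: cnt_def qg_of_int_mult)
  also have "\<dots> = multiplicity p \<bar>m\<bar> + multiplicity p (qg x)"
    by (rule prime_elem_multiplicity_mult_distrib) (use pp m x qg_eq_0_iff in auto)
  also have "multiplicity p \<bar>m\<bar> = multiplicity p m"
    using multiplicity_normalize_right[of p m] by simp
  finally show ?thesis by (simp add: cnt_def)
qed

lemma cnt_conj[simp]: "cnt p (qconj x) = cnt p x"
  by (simp add: cnt_def qg_def)

lemma vN_mult: "x \<noteq> 0 \<Longrightarrow> y \<noteq> 0 \<Longrightarrow> vN p (x * y) = vN p x + vN p y"
  unfolding vN_def qnorm_mult
  by (subst prime_elem_multiplicity_mult_distrib) (use pp qnorm_zero_iff in auto)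

lemma vN_of_int: "vN p (of_int m) = 2 * multiplicity p m"
proof (cases "m = 0")
  case False then show ?thesis unfolding vN_def qnorm_of_int
    by (subst prime_elem_multiplicity_power_distrib) (use pp in auto)
qed (simp add: vN_def qnorm_def)

lemma vN_conj[simp]: "vN p (qconj x) = vN p x" by (simp add: vN_def)

lemma cnt_le_vN: "x \<noteq> 0 \<Longrightarrow> 2 * cnt p x \<le> vN p x"
proof -
  assume x: "x \<noteq> 0"
  have "(p ^ cnt p x)^2 dvd qnorm x" by (rule qdvd_norm[OF qdvd_cnt])
  then have "p ^ (2 * cnt p x) dvd qnorm x" by (simp add: power_mult[symmetric] mult.commute)
  then show ?thesis unfolding vN_def using power_dvd_iff_le_multiplicity[of "qnorm x" p] x p_not_unit qnorm_zero_iff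
    by blast
qed

lemma DD_nonneg: "x \<noteq> 0 \<Longrightarrow> DD p x \<ge> 0"
proof -
  assume "x \<noteq> 0"
  then have "2 * cnt p x \<le> vN p x" by (rule cnt_le_vN)
  then show ?thesis by (simp add: DD_def)
qed

lemma GG_nonneg: "x \<noteq> 0 \<Longrightarrow> y \<noteq> 0 \<Longrightarrow> GG p x y \<ge> 0"
proof -
  assume "x \<noteq> 0" "y \<noteq> 0"
  then have "cnt p x + cnt p y \<le> cnt p (x * y)" by (rule cnt_mult_ge)
  then show ?thesis by (simp add: GG_def)
qed

lemma DD_mult: "x \<noteq> 0 \<Longrightarrow> y \<noteq> 0 \<Longrightarrow> DD p (x * y) = DD p x + DD p y - 2 * GG p x y"
  by (simp add: DD_def GG_def vN_mult)

lemma DD_conj[simp]: "DD p (qconj x) = DD p x" by (simp add: DD_def)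

lemma DD_of_int_mult: "m \<noteq> 0 \<Longrightarrow> x \<noteq> 0 \<Longrightarrow> DD p (of_int m * x) = DD p x"
proof -
  assume m: "m \<noteq> 0" and x: "x \<noteq> 0"
  have "of_int m \<noteq> (0::hq)" using m by (simp add: hq_eq_iff)
  then show ?thesis using m x by (simp add: DD_def vN_mult vN_of_int cnt_of_int_mult)
qed

lemma DD_of_int: "m \<noteq> 0 \<Longrightarrow> DD p (of_int m) = 0"
  using DD_of_int_mult[of m 1] by (simp add: DD_def cnt_def qg_def vN_def)

lemma cnt_unit: "\<not> p dvd qnorm x \<Longrightarrow> cnt p x = 0"
  using cnt_le_vN[of x] by (cases "x = 0") (auto simp: vN_def not_dvd_imp_multiplicity_0 qnorm_def)

end


lemma numeral_sel[simp]: "q0 (numeral n :: hq) = numeral n" "q1 (numeral n :: hq) = 0"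
  "q2 (numeral n :: hq) = 0" "q3 (numeral n :: hq) = 0"
  by (metis of_int_numeral of_int_sel)+

lemma add_qconj: "u + qconj u = of_int (2 * q0 u)"
  by (simp add: hq_eq_iff)

lemma of_int_mult_comm_assoc: "a * (of_int c * b) = of_int c * (a * (b::hq))"
  by (metis mult.assoc of_int_commute)

lemma key_identity:
  "qconj x * y * w * z + qconj x * qconj w * (qconj y * z) = of_int (2 * q0 (y * w)) * (qconj x * z)"
proof -
  have "qconj x * y * w * z + qconj x * qconj w * (qconj y * z) = qconj x * ((y * w + qconj (y * w)) * z)"
    by (simp add: qconj_mult distrib_left distrib_right mult.assoc)
  also have "\<dots> = of_int (2 * q0 (y * w)) * (qconj x * z)"
    by (simp only: add_qconj of_int_mult_comm_assoc)
  finally show ?thesis .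
qed

lemma qconj_nz: "x \<noteq> 0 \<Longrightarrow> qconj x \<noteq> 0"
  by (metis qnorm_conj qnorm_zero_iff)

lemma mult_nz: "x \<noteq> 0 \<Longrightarrow> y \<noteq> 0 \<Longrightarrow> x * y \<noteq> (0::hq)"
  by (rule hq_no_zero_divisors)

lemma nz_of_int: "m \<noteq> 0 \<Longrightarrow> (of_int m :: hq) \<noteq> 0"
  by (simp add: hq_eq_iff)

context
  fixes p :: int
  assumes pp: "Factorial_Ring.prime p" and podd: "odd p"
begin

lemma qdvd_cancel_coprime: "\<not> p dvd c \<Longrightarrow> qdvd (p^m) (of_int c * u) \<Longrightarrow> qdvd (p^m) u"
proof -
  assume c: "\<not> p dvd c" and d: "qdvd (p^m) (of_int c * u)"
  have "coprime p c" using c pp by (simp add: prime_imp_coprime)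
  then have cop: "coprime (p^m) c" by simp
  from d show ?thesis unfolding qdvd_def
    using cop by (simp add: coprime_dvd_mult_right_iff)
qed

lemma lemma_L:
  assumes y: "\<not> qdvd p y" and xy: "qdvd (p^m) (qconj x * y)" and yz: "qdvd (p^m) (qconj y * z)"
  shows "qdvd (p^m) (qconj x * z)"
proof -
  have main: "qdvd (p^m) (of_int (2 * q0 (y * w)) * (qconj x * z))" for w
  proof -
    have "qdvd (p^m) (qconj x * y * w * z + qconj x * qconj w * (qconj y * z))"
      by (rule qdvd_add[OF qdvd_mult_right[OF qdvd_mult_right[OF xy]] qdvd_mult_left[OF yz]])
    then show ?thesis by (simp only: key_identity)
  qed
  have p2: "\<not> p dvd 2"
  proof
    assume "p dvd 2"
    then have "p \<le> 2" by (rule zdvd_imp_le) simp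
    moreover have "p \<ge> 2" using pp by (rule prime_ge_2_int)
    ultimately have "p = 2" by simp
    then show False using podd by simp
  qed
  have ndvd: "\<not> p dvd 2 * c" if "\<not> p dvd c" for c
    using that p2 pp by (simp add: prime_dvd_mult_iff)
  have fin: "qdvd (p^m) (qconj x * z)" if "\<not> p dvd c" "q0 (y * w) = c" for w c
  proof -
    have "qdvd (p^m) (of_int (2 * c) * (qconj x * z))" using main[of w] unfolding that(2) .
    then show ?thesis by (rule qdvd_cancel_coprime[OF ndvd[OF that(1)]])
  qed
  consider "\<not> p dvd q0 y" | "\<not> p dvd (- q1 y)" | "\<not> p dvd (- q2 y)" | "\<not> p dvd (- q3 y)"
    using y unfolding qdvd_def by auto
  then show ?thesis
  proof cases
    case 1 show ?thesis by (rule fin[OF 1, of 1]) simp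
  next
    case 2 show ?thesis by (rule fin[OF 2, of "HQ 0 1 0 0"]) simp
  next
    case 3 show ?thesis by (rule fin[OF 3, of "HQ 0 0 1 0"]) simp
  next
    case 4 show ?thesis by (rule fin[OF 4, of "HQ 0 0 0 1"]) simp
  qed
qed

lemma gp_scale_left: "m \<noteq> 0 \<Longrightarrow> x \<noteq> 0 \<Longrightarrow> y \<noteq> 0 \<Longrightarrow> gp p (of_int m * x) y = gp p x y"
proof -
  assume m: "m \<noteq> 0" and x: "x \<noteq> 0" and y: "y \<noteq> 0"
  have e: "qconj (of_int m * x) * y = of_int m * (qconj x * y)"
    by (simp add: qconj_mult of_int_commute mult.assoc)
  have e2: "qconj (of_int m * x) = of_int m * qconj x"
    by (simp add: qconj_mult of_int_commute)
  have nz: "qconj x * y \<noteq> 0" using x y qconj_nz mult_nz by blast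
  have "cnt p (of_int m * (qconj x * y)) = multiplicity p m + cnt p (qconj x * y)"
    using cnt_of_int_mult[OF pp m nz] .
  moreover have "cnt p (of_int m * x) = multiplicity p m + cnt p x"
    using cnt_of_int_mult[OF pp m x] .
  ultimately show ?thesis unfolding gp_def GG_def e by (simp add: cnt_conj[OF pp])
qed

end


context
  fixes p :: int
  assumes pp: "Factorial_Ring.prime p" and podd: "odd p"
begin

lemma gp_scale_right: "m \<noteq> 0 \<Longrightarrow> x \<noteq> 0 \<Longrightarrow> y \<noteq> 0 \<Longrightarrow> gp p x (of_int m * y) = gp p x y"
proof -
  assume m: "m \<noteq> 0" and x: "x \<noteq> 0" and y: "y \<noteq> 0"
  have e: "qconj x * (of_int m * y) = of_int m * (qconj x * y)"
    by (rule of_int_mult_comm_assoc)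
  have nz: "qconj x * y \<noteq> 0" using x y qconj_nz mult_nz by blast
  have "cnt p (of_int m * (qconj x * y)) = multiplicity p m + cnt p (qconj x * y)"
    using cnt_of_int_mult[OF pp m nz] .
  moreover have "cnt p (of_int m * y) = multiplicity p m + cnt p y"
    using cnt_of_int_mult[OF pp m y] .
  ultimately show ?thesis unfolding gp_def GG_def e by (simp add: cnt_conj[OF pp])
qed

lemma gp_sym: "gp p x y = gp p y x"
proof -
  have "cnt p (qconj x * y) = cnt p (qconj (qconj x * y))" by (simp only: cnt_conj[OF pp])
  also have "qconj (qconj x * y) = qconj y * x" by (simp add: qconj_mult)
  finally show ?thesis unfolding gp_def GG_def by (simp add: cnt_conj[OF pp])
qed

lemma cnt_prim: "\<not> qdvd p x \<Longrightarrow> cnt p x = 0"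
proof (cases "x = 0")
  case True assume "\<not> qdvd p x" with True show ?thesis by (simp add: qdvd_def)
next
  case False assume "\<not> qdvd p x"
  with qdvd_pow_iff[OF pp False, of 1] show ?thesis by simp
qed

lemma gp_prim: "\<not> qdvd p x \<Longrightarrow> \<not> qdvd p y \<Longrightarrow> gp p x y = int (cnt p (qconj x * y))"
  unfolding gp_def GG_def using cnt_prim by (simp add: cnt_conj[OF pp])

lemma decomp_nz:
  assumes "x \<noteq> 0"
  obtains x' where "x = of_int (p ^ cnt p x) * x'" "\<not> qdvd p x'" "x' \<noteq> 0"
proof -
  obtain x' where x': "x = of_int (p ^ cnt p x) * x'" "\<not> qdvd p x'" by (rule cnt_decomp[OF pp assms])
  then have "x' \<noteq> 0" using assms by auto
  with x' that show ?thesis by blast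
qed

lemma p_pow_nz: "p ^ n \<noteq> 0" using pp by (simp add: p_nz)

lemma hyp0:
  assumes x: "x \<noteq> 0" and y: "y \<noteq> 0" and z: "z \<noteq> 0"
  shows "gp p x z \<ge> min (gp p x y) (gp p y z)"
proof -
  obtain x' where x': "x = of_int (p ^ cnt p x) * x'" "\<not> qdvd p x'" "x' \<noteq> 0" by (rule decomp_nz[OF x])
  obtain y' where y': "y = of_int (p ^ cnt p y) * y'" "\<not> qdvd p y'" "y' \<noteq> 0" by (rule decomp_nz[OF y])
  obtain z' where z': "z = of_int (p ^ cnt p z) * z'" "\<not> qdvd p z'" "z' \<noteq> 0" by (rule decomp_nz[OF z])
  have r: "gp p (of_int (p ^ a) * u) (of_int (p ^ b) * v) = gp p u v" if "u \<noteq> 0" "v \<noteq> 0" for a b u v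
  proof -
    have "gp p (of_int (p ^ a) * u) (of_int (p ^ b) * v) = gp p u (of_int (p ^ b) * v)"
      by (rule gp_scale_left[OF pp podd p_pow_nz that(1) mult_nz[OF nz_of_int[OF p_pow_nz] that(2)]])
    also have "\<dots> = gp p u v" by (rule gp_scale_right[OF p_pow_nz that])
    finally show ?thesis .
  qed
  have exy: "gp p x y = int (cnt p (qconj x' * y'))"
    by (subst x'(1), subst y'(1), subst r[OF x'(3) y'(3)]) (rule gp_prim[OF x'(2) y'(2)])
  have eyz: "gp p y z = int (cnt p (qconj y' * z'))"
    by (subst y'(1), subst z'(1), subst r[OF y'(3) z'(3)]) (rule gp_prim[OF y'(2) z'(2)])
  have exz: "gp p x z = int (cnt p (qconj x' * z'))"
    by (subst x'(1), subst z'(1), subst r[OF x'(3) z'(3)]) (rule gp_prim[OF x'(2) z'(2)])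
  define m where "m = min (cnt p (qconj x' * y')) (cnt p (qconj y' * z'))"
  have nz1: "qconj x' * y' \<noteq> 0" using x'(3) y'(3) qconj_nz mult_nz by blast
  have nz2: "qconj y' * z' \<noteq> 0" using z'(3) y'(3) qconj_nz mult_nz by blast
  have nz3: "qconj x' * z' \<noteq> 0" using x'(3) z'(3) qconj_nz mult_nz by blast
  have "qdvd (p^m) (qconj x' * y')" using qdvd_pow_iff[OF pp nz1] m_def by simp
  moreover have "qdvd (p^m) (qconj y' * z')" using qdvd_pow_iff[OF pp nz2] m_def by simp
  ultimately have "qdvd (p^m) (qconj x' * z')" by (rule lemma_L[OF pp podd y'(2)])
  then have "m \<le> cnt p (qconj x' * z')" using qdvd_pow_iff[OF pp nz3] by simp
  then show ?thesis unfolding exy eyz exz m_def by simp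
qed

lemma gp_DD: "x \<noteq> 0 \<Longrightarrow> y \<noteq> 0 \<Longrightarrow> 2 * gp p x y = DD p x + DD p y - DD p (qconj x * y)"
proof -
  assume x: "x \<noteq> 0" and y: "y \<noteq> 0"
  show ?thesis using DD_mult[OF pp qconj_nz[OF x] y] unfolding gp_def by (simp add: DD_conj[OF pp])
qed

lemma gp_nonneg: "x \<noteq> 0 \<Longrightarrow> y \<noteq> 0 \<Longrightarrow> gp p x y \<ge> 0"
  unfolding gp_def by (rule GG_nonneg[OF pp qconj_nz])

lemma DD_mult_le: "x \<noteq> 0 \<Longrightarrow> y \<noteq> 0 \<Longrightarrow> DD p (x * y) \<le> DD p x + DD p y"
proof -
  assume x: "x \<noteq> 0" and y: "y \<noteq> 0"
  show ?thesis using DD_mult[OF pp x y] GG_nonneg[OF pp x y] by simp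
qed

lemma gp_le_DD: "x \<noteq> 0 \<Longrightarrow> y \<noteq> 0 \<Longrightarrow> gp p x y \<le> DD p x"
proof -
  assume x: "x \<noteq> 0" and y: "y \<noteq> 0"
  have nz: "qconj x * y \<noteq> 0" using x y qconj_nz mult_nz by blast
  have "x * (qconj x * y) = of_int (qnorm x) * y" by (simp add: mult.assoc[symmetric] mult_qconj)
  then have "DD p y = DD p (x * (qconj x * y))"
    using DD_of_int_mult[OF pp _ y, of "qnorm x"] x qnorm_zero_iff by simp
  also have "\<dots> \<le> DD p x + DD p (qconj x * y)" by (rule DD_mult_le[OF x nz])
  finally show ?thesis using gp_DD[OF x y] by simp
qed

lemma cnt_unit_left: assumes b: "\<not> p dvd qnorm b" and z: "z \<noteq> 0" shows "cnt p (b * z) = cnt p z"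
proof -
  have b0: "b \<noteq> 0" using b by (auto simp: qnorm_def)
  have nz: "b * z \<noteq> 0" using b0 z mult_nz by blast
  have "cnt p z \<le> cnt p (b * z)" using cnt_mult_ge[OF pp b0 z] by simp
  moreover have "cnt p (b * z) \<le> cnt p (qconj b * (b * z))"
    using cnt_mult_ge[OF pp qconj_nz[OF b0] nz] by simp
  moreover have "qconj b * (b * z) = of_int (qnorm b) * z" by (simp add: mult.assoc[symmetric] qconj_mult_self)
  moreover have "cnt p (of_int (qnorm b) * z) = cnt p z"
    using cnt_of_int_mult[OF pp _ z, of "qnorm b"] b0 qnorm_zero_iff b
    by (simp add: not_dvd_imp_multiplicity_0)
  ultimately show ?thesis by simp
qed

lemma cnt_unit_right: assumes b: "\<not> p dvd qnorm b" and z: "z \<noteq> 0" shows "cnt p (z * b) = cnt p z"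
proof -
  have "cnt p (z * b) = cnt p (qconj (z * b))" by (simp add: cnt_conj[OF pp])
  also have "\<dots> = cnt p (qconj b * qconj z)" by (simp add: qconj_mult)
  also have "\<dots> = cnt p (qconj z)" by (rule cnt_unit_left) (use b z qconj_nz in auto)
  finally show ?thesis by (simp add: cnt_conj[OF pp])
qed

lemma vN_unit: "\<not> p dvd qnorm b \<Longrightarrow> vN p b = 0"
  by (simp add: vN_def not_dvd_imp_multiplicity_0)

lemma DD_unit_left: assumes b: "\<not> p dvd qnorm b" and z: "z \<noteq> 0" shows "DD p (b * z) = DD p z"
proof -
  have b0: "b \<noteq> 0" using b by (auto simp: qnorm_def)
  show ?thesis unfolding DD_def using cnt_unit_left[OF b z] vN_mult[OF pp b0 z] vN_unit[OF b] by simp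
qed

lemma DD_unit_right: assumes b: "\<not> p dvd qnorm b" and z: "z \<noteq> 0" shows "DD p (z * b) = DD p z"
proof -
  have b0: "b \<noteq> 0" using b by (auto simp: qnorm_def)
  show ?thesis unfolding DD_def using cnt_unit_right[OF b z] vN_mult[OF pp z b0] vN_unit[OF b] by simp
qed

lemma gp_unit_both: assumes b: "\<not> p dvd qnorm b" and x: "x \<noteq> 0" and y: "y \<noteq> 0"
  shows "gp p (b * x) (b * y) = gp p x y"
proof -
  have b0: "b \<noteq> 0" using b by (auto simp: qnorm_def)
  have e: "qconj (b * x) * (b * y) = of_int (qnorm b) * (qconj x * y)"
  proof -
    have "qconj (b * x) * (b * y) = qconj x * ((qconj b * b) * y)" by (simp add: qconj_mult mult.assoc)
    also have "\<dots> = of_int (qnorm b) * (qconj x * y)" by (simp add: qconj_mult_self of_int_mult_comm_assoc)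
    finally show ?thesis .
  qed
  have nz: "qconj x * y \<noteq> 0" using x y qconj_nz mult_nz by blast
  have "cnt p (of_int (qnorm b) * (qconj x * y)) = cnt p (qconj x * y)"
    using cnt_of_int_mult[OF pp _ nz, of "qnorm b"] b0 qnorm_zero_iff b
    by (simp add: not_dvd_imp_multiplicity_0)
  then show ?thesis unfolding gp_def GG_def e
    by (simp add: cnt_conj[OF pp] cnt_unit_left[OF b x] cnt_unit_left[OF b y])
qed

lemma gp_unit_right: assumes b: "\<not> p dvd qnorm b" and x: "x \<noteq> 0" and y: "y \<noteq> 0"
  shows "gp p x (y * b) = gp p x y"
proof -
  have nz: "qconj x * y \<noteq> 0" using x y qconj_nz mult_nz by blast
  have "cnt p (qconj x * (y * b)) = cnt p (qconj x * y)"
    using cnt_unit_right[OF b nz] by (simp add: mult.assoc)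
  then show ?thesis unfolding gp_def GG_def by (simp add: cnt_unit_right[OF b y])
qed

end


definition prodl :: "hq list \<Rightarrow> hq" where "prodl xs = foldr (*) xs 1"

lemma prodl_simps: "prodl [] = 1" "prodl (x # xs) = x * prodl xs"
  by (simp_all add: prodl_def)

lemma GG_gp: "GG p a b = gp p (qconj a) b" by (simp add: gp_def)

context
  fixes p :: int
  assumes pp: "Factorial_Ring.prime p" and podd: "odd p"
begin

lemma gp_self_prod: assumes s: "s \<noteq> 0" and P: "P \<noteq> 0"
  shows "gp p s (s * P) = DD p s - GG p s P"
proof -
  have sP: "s * P \<noteq> 0" using s P mult_nz by blast
  have "qconj s * (s * P) = of_int (qnorm s) * P" by (simp add: mult.assoc[symmetric] qconj_mult_self)
  then have "DD p (qconj s * (s * P)) = DD p P"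
    using DD_of_int_mult[OF pp _ P, of "qnorm s"] s qnorm_zero_iff by simp
  then show ?thesis using gp_DD[OF pp podd s sP] DD_mult[OF pp s P] by simp
qed

lemma pingpong:
  assumes "xs \<noteq> []" "\<forall>s\<in>set xs. s \<noteq> 0" "\<forall>s\<in>set xs. DD p s > 2 * C"
    "successively (\<lambda>a b. GG p a b \<le> C) xs"
  shows "prodl xs \<noteq> 0 \<and> DD p (prodl xs) \<ge> DD p (hd xs) \<and>
         (\<forall>y. y \<noteq> 0 \<longrightarrow> GG p y (hd xs) \<le> C \<longrightarrow> GG p y (prodl xs) = GG p y (hd xs))"
  using assms
proof (induction xs rule: induct_list012)
  case 1 then show ?case by simp
next
  case (2 x) then show ?case by (simp add: prodl_simps)
next
  case (3 s0 s1 rest)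
  let ?P = "prodl (s1 # rest)"
  have IH0: "prodl (s1 # rest) \<noteq> 0 \<and> DD p (prodl (s1 # rest)) \<ge> DD p (hd (s1 # rest)) \<and>
         (\<forall>y. y \<noteq> 0 \<longrightarrow> GG p y (hd (s1 # rest)) \<le> C \<longrightarrow> GG p y (prodl (s1 # rest)) = GG p y (hd (s1 # rest)))"
  proof (rule "3.IH"(2))
    show "s1 # rest \<noteq> []" by simp
    show "\<forall>s\<in>set (s1 # rest). s \<noteq> 0" using "3.prems"(2) by simp
    show "\<forall>s\<in>set (s1 # rest). DD p s > 2 * C" using "3.prems"(3) by simp
    show "successively (\<lambda>a b. GG p a b \<le> C) (s1 # rest)" using "3.prems"(4) by simp
  qed
  have IH: "?P \<noteq> 0 \<and> DD p ?P \<ge> DD p s1 \<and>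
         (\<forall>y. y \<noteq> 0 \<longrightarrow> GG p y s1 \<le> C \<longrightarrow> GG p y ?P = GG p y s1)"
    using IH0 by simp
  have s0: "s0 \<noteq> 0" using "3.prems"(2) by simp
  have ds0: "DD p s0 > 2 * C" using "3.prems"(3) by simp
  have ds1: "DD p s1 > 2 * C" using "3.prems"(3) by simp
  have g01: "GG p s0 s1 \<le> C" using "3.prems"(4) by simp
  have P0: "?P \<noteq> 0" using IH by (rule conjunct1)
  have gP: "GG p s0 ?P = GG p s0 s1" using IH s0 g01 by simp
  have DP: "DD p ?P > 2 * C" using IH ds1 by simp
  have prod: "prodl (s0 # s1 # rest) = s0 * ?P" by (simp only: prodl_simps(2))
  have nz: "s0 * ?P \<noteq> 0" using s0 P0 mult_nz by blast
  have D1: "DD p (s0 * ?P) \<ge> DD p s0"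
    using DD_mult[OF pp s0 P0] gP g01 DP by simp
  have G2: "GG p y (s0 * ?P) = GG p y s0" if y: "y \<noteq> 0" and gy: "GG p y s0 \<le> C" for y
  proof -
    define yc where "yc = qconj y"
    have yc0: "yc \<noteq> 0" unfolding yc_def by (rule qconj_nz[OF y])
    have gyY: "gp p yc s0 \<le> C" using gy by (simp add: GG_gp yc_def)
    have gYZ: "gp p s0 (s0 * ?P) > C"
      using gp_self_prod[OF s0 P0] gP g01 ds0 by simp
    have h1: "gp p yc (s0 * ?P) \<ge> min (gp p yc s0) (gp p s0 (s0 * ?P))"
      by (rule hyp0[OF pp podd yc0 s0 nz])
    have h2: "gp p yc s0 \<ge> min (gp p yc (s0 * ?P)) (gp p (s0 * ?P) s0)"
      by (rule hyp0[OF pp podd yc0 nz s0])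
    have sym: "gp p (s0 * ?P) s0 = gp p s0 (s0 * ?P)" by (rule gp_sym[OF pp podd])
    have "gp p yc (s0 * ?P) = gp p yc s0" using h1 h2 sym gyY gYZ by linarith
    then show ?thesis by (simp add: GG_gp yc_def)
  qed
  show ?case unfolding prod using nz D1 G2 by simp
qed

end


definition vv :: "hq \<Rightarrow> int" where "vv x = (q1 x)^2 + (q2 x)^2 + (q3 x)^2"

fun AB :: "hq \<Rightarrow> nat \<Rightarrow> int \<times> int" where
  "AB x 0 = (1, 0)"
| "AB x (Suc n) = (q0 x * fst (AB x n) - vv x * snd (AB x n), fst (AB x n) + q0 x * snd (AB x n))"

lemma pow_form: "x ^ n = HQ (fst (AB x n)) (snd (AB x n) * q1 x) (snd (AB x n) * q2 x) (snd (AB x n) * q3 x)"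
proof (induct n)
  case 0 then show ?case by (simp add: hq_eq_iff)
next
  case (Suc n)
  have "x ^ Suc n = x ^ n * x" by (simp add: power_commutes)
  also have "\<dots> = HQ (fst (AB x n)) (snd (AB x n) * q1 x) (snd (AB x n) * q2 x) (snd (AB x n) * q3 x) * x"
    using Suc by simp
  finally show ?case by (simp add: hq_eq_iff vv_def power2_eq_square algebra_simps)
qed

lemma AB_add: "AB x (m + n) = (fst (AB x m) * fst (AB x n) - vv x * snd (AB x m) * snd (AB x n),
                                fst (AB x m) * snd (AB x n) + snd (AB x m) * fst (AB x n))"
  by (induct n) (simp_all add: algebra_simps)

lemma AB_parity: "odd (q0 x) \<Longrightarrow> even (vv x) \<Longrightarrow> odd (fst (AB x n)) \<and> (odd (snd (AB x n)) \<longleftrightarrow> odd n)"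
  by (induct n) auto

lemma B_nz: assumes "odd (q0 x)" "even (vv x)" "n \<ge> 1" shows "snd (AB x n) \<noteq> 0"
  using assms(3)
proof (induction n rule: less_induct)
  case (less n)
  show ?case
  proof (cases "odd n")
    case True then show ?thesis using AB_parity[OF assms(1,2), of n] by auto
  next
    case False
    then obtain k where k: "n = k + k" by (metis evenE mult_2)
    then have "k \<ge> 1" "k < n" using less.prems by auto
    then have "snd (AB x k) \<noteq> 0" using less.IH by blast
    moreover have "fst (AB x k) \<noteq> 0" using AB_parity[OF assms(1,2), of k] by auto
    ultimately show ?thesis unfolding k AB_add by simp
  qed
qed

definition scalar :: "hq \<Rightarrow> bool" where "scalar x \<longleftrightarrow> q1 x = 0 \<and> q2 x = 0 \<and> q3 x = 0"

lemma pow_nonscalar: assumes "odd (q0 x)" "even (vv x)" "n \<ge> 1" "\<not> scalar x" shows "\<not> scalar (x ^ n)"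
  using B_nz[OF assms(1-3)] assms(4) unfolding scalar_def pow_form by simp

lemma commutator_pow: "x ^ n * y - y * x ^ n = of_int (snd (AB x n)) * (x * y - y * x)"
  unfolding pow_form by (simp add: hq_eq_iff algebra_simps)

lemma of_int_mult_cancel: "m \<noteq> 0 \<Longrightarrow> of_int m * u = of_int m * w \<Longrightarrow> u = (w::hq)"
  by (simp add: hq_eq_iff)

lemma pow_commute_imp: assumes "odd (q0 x)" "even (vv x)" "n \<ge> 1" "x ^ n * y = y * x ^ n"
  shows "x * y = y * x"
proof -
  have "of_int (snd (AB x n)) * (x * y - y * x) = 0" using commutator_pow[of x n y] assms(4) by simp
  then have "x * y - y * x = 0" using B_nz[OF assms(1-3)] by (auto simp: hq_eq_iff algebra_simps)
  then show ?thesis by simp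
qed

lemma no_anticommute: assumes "x * y = - (y * x)" "q0 x \<noteq> 0" "q0 y \<noteq> 0" shows False
proof -
  have E: "q0 (x*y) = - q0 (y*x)" "q1 (x*y) = - q1 (y*x)" "q2 (x*y) = - q2 (y*x)" "q3 (x*y) = - q3 (y*x)"
    using assms(1) by simp_all
  have id: "2 * q0 y * qnorm x = q0 x * (q0 (x*y) + q0 (y*x)) + q1 x * (q1 (x*y) + q1 (y*x))
      + q2 x * (q2 (x*y) + q2 (y*x)) + q3 x * (q3 (x*y) + q3 (y*x))"
    unfolding hq_mult_sel qnorm_def power2_eq_square by (simp add: algebra_simps)
  have "q0 y * qnorm x = 0" using id E by simp
  moreover have "qnorm x \<noteq> 0" using assms(2) qnorm_zero_iff by auto
  ultimately show False using assms(3) by simp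
qed

definition qprop :: "hq \<Rightarrow> hq \<Rightarrow> bool" where
  "qprop x y \<longleftrightarrow> (\<exists>m n. m \<noteq> 0 \<and> n \<noteq> 0 \<and> of_int m * x = of_int n * y)"

lemma qprop_refl: "qprop x x" unfolding qprop_def by (rule exI[of _ 1], rule exI[of _ 1]) simp

lemma qprop_sym: "qprop x y \<Longrightarrow> qprop y x"
proof -
  assume "qprop x y"
  then obtain m n where "m \<noteq> 0" "n \<noteq> 0" "of_int m * x = of_int n * y" unfolding qprop_def by blast
  then show "qprop y x" unfolding qprop_def by (intro exI[of _ n] exI[of _ m]) simp
qed

lemma qprop_trans: assumes "qprop x y" "qprop y z" shows "qprop x z"
proof -
  obtain m n where 1: "m \<noteq> 0" "n \<noteq> 0" "of_int m * x = of_int n * y" using assms(1) qprop_def by blast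
  obtain m' n' where 2: "m' \<noteq> 0" "n' \<noteq> 0" "of_int m' * y = of_int n' * z" using assms(2) qprop_def by blast
  have "of_int (m' * m) * x = of_int m' * (of_int m * x)" by (simp add: mult.assoc)
  also have "\<dots> = of_int m' * (of_int n * y)" using 1(3) by simp
  also have "\<dots> = of_int n * (of_int m' * y)" by (rule of_int_mult_comm_assoc)
  also have "\<dots> = of_int (n * n') * z" using 2(3) by (simp add: mult.assoc)
  finally show ?thesis unfolding qprop_def using 1 2 by (intro exI[of _ "m' * m"] exI[of _ "n * n'"]) simp
qed

lemma qprop_mult: assumes "qprop x x'" "qprop y y'" shows "qprop (x * y) (x' * y')"
proof -
  obtain m n where 1: "m \<noteq> 0" "n \<noteq> 0" "of_int m * x = of_int n * x'" using assms(1) qprop_def by blast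
  obtain m' n' where 2: "m' \<noteq> 0" "n' \<noteq> 0" "of_int m' * y = of_int n' * y'" using assms(2) qprop_def by blast
  have sw: "(of_int a * u) * (of_int b * w) = of_int (a * b) * (u * (w::hq))" for a b u w
  proof -
    have "(of_int a * u) * (of_int b * w) = of_int a * (u * (of_int b * w))" by (simp only: mult.assoc)
    also have "u * (of_int b * w) = of_int b * (u * w)" by (rule of_int_mult_comm_assoc)
    finally show ?thesis by (simp only: of_int_mult mult.assoc)
  qed
  have "of_int (m * m') * (x * y) = (of_int m * x) * (of_int m' * y)" by (simp only: sw)
  also have "\<dots> = (of_int n * x') * (of_int n' * y')" using 1 2 by simp
  also have "\<dots> = of_int (n * n') * (x' * y')" by (simp only: sw)
  finally show ?thesis unfolding qprop_def using 1 2 by (intro exI[of _ "m * m'"] exI[of _ "n * n'"]) simp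
qed

lemma qprop_of_int_left: "c \<noteq> 0 \<Longrightarrow> qprop (of_int c * x) x"
  unfolding qprop_def by (intro exI[of _ 1] exI[of _ c]) simp

lemma qprop_of_int: "c \<noteq> 0 \<Longrightarrow> qprop (of_int c) 1"
  using qprop_of_int_left[of c 1] by simp

lemma qprop_conj: "qprop x y \<Longrightarrow> qprop (qconj x) (qconj y)"
proof -
  assume "qprop x y"
  then obtain m n where 1: "m \<noteq> 0" "n \<noteq> 0" "of_int m * x = of_int n * y" unfolding qprop_def by blast
  have "of_int m * qconj x = qconj (of_int m * x)" by (simp add: qconj_mult of_int_commute)
  also have "\<dots> = qconj (of_int n * y)" using 1(3) by simp
  also have "\<dots> = of_int n * qconj y" by (simp add: qconj_mult of_int_commute)
  finally show ?thesis unfolding qprop_def using 1 by (intro exI[of _ m] exI[of _ n]) simp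
qed

lemma qprop_nz: "qprop x y \<Longrightarrow> x \<noteq> 0 \<Longrightarrow> y \<noteq> 0"
  unfolding qprop_def by (auto simp: hq_eq_iff)

lemma qprop_norm_eq: assumes "qprop x y" "qnorm x = qnorm y" "x \<noteq> 0" shows "x = y \<or> x = - y"
proof -
  obtain m n where 1: "m \<noteq> 0" "n \<noteq> 0" "of_int m * x = of_int n * y" using assms(1) qprop_def by blast
  have "qnorm (of_int m * x) = qnorm (of_int n * y)" using 1(3) by simp
  then have "m^2 * qnorm x = n^2 * qnorm x" using assms(2) by (simp add: qnorm_mult)
  then have "m^2 = n^2" using assms(3) qnorm_zero_iff by simp
  then have "m = n \<or> m = - n" by (simp add: power2_eq_iff)
  then show ?thesis
  proof
    assume "m = n" then show ?thesis using 1 of_int_mult_cancel by blast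
  next
    assume "m = - n"
    then have "of_int m * x = of_int m * (- y)" using 1(3) by simp
    then show ?thesis using 1(1) of_int_mult_cancel by blast
  qed
qed

lemma qprop_commute: assumes "qprop (x * y) (y * x)" "q0 x \<noteq> 0" "q0 y \<noteq> 0"
  shows "x * y = y * x"
proof -
  have x0: "x \<noteq> 0" and y0: "y \<noteq> 0" using assms(2,3) by auto
  have nz: "x * y \<noteq> 0" using x0 y0 mult_nz by blast
  have "qnorm (x*y) = qnorm (y*x)" by (simp add: qnorm_mult mult.commute)
  then have "x * y = y * x \<or> x * y = - (y * x)" using qprop_norm_eq[OF assms(1) _ nz] by simp
  then show ?thesis using no_anticommute assms(2,3) by blast
qed

lemma scalar_qprop_one: "x \<noteq> 0 \<Longrightarrow> scalar x \<longleftrightarrow> qprop x 1"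
proof
  assume x: "x \<noteq> 0" and s: "scalar x"
  then have "q0 x \<noteq> 0" by (auto simp: scalar_def hq_eq_iff)
  moreover have "of_int 1 * x = of_int (q0 x) * 1" using s by (simp add: scalar_def hq_eq_iff)
  ultimately show "qprop x 1" unfolding qprop_def by (intro exI[of _ 1] exI[of _ "q0 x"]) simp
next
  assume "qprop x 1"
  then obtain m n where "m \<noteq> 0" "of_int m * x = of_int n * 1" unfolding qprop_def by blast
  then show "scalar x" by (simp add: scalar_def hq_eq_iff)
qed



definition t1 :: "hq \<Rightarrow> bool" where "t1 x \<longleftrightarrow> odd (q0 x) \<and> even (q1 x) \<and> even (q2 x) \<and> even (q3 x)"
definition t3 :: "hq \<Rightarrow> bool" where "t3 x \<longleftrightarrow> odd (q0 x) \<and> even (q1 x) \<and> odd (q2 x) \<and> odd (q3 x)"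

lemma t1_mod4: "t1 x \<Longrightarrow> qnorm x mod 4 = 1"
proof -
  assume "t1 x"
  then obtain a1 a2 a3 a4 where "q0 x = 2*a1+1" "q1 x = 2*a2" "q2 x = 2*a3" "q3 x = 2*a4"
    unfolding t1_def by (meson evenE oddE)
  then have "qnorm x = 4 * (a1^2 + a1 + a2^2 + a3^2 + a4^2) + 1"
    by (simp add: qnorm_def power2_eq_square algebra_simps)
  then show ?thesis by (simp only:) presburger
qed

lemma t3_mod4: "t3 x \<Longrightarrow> qnorm x mod 4 = 3"
proof -
  assume "t3 x"
  then obtain a1 a2 a3 a4 where "q0 x = 2*a1+1" "q1 x = 2*a2" "q2 x = 2*a3+1" "q3 x = 2*a4+1"
    unfolding t3_def by (meson evenE oddE)
  then have "qnorm x = 4 * (a1^2 + a1 + a2^2 + a3^2 + a3 + a4^2 + a4) + 3"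
    by (simp add: qnorm_def power2_eq_square algebra_simps)
  then show ?thesis by (simp only:) presburger
qed

lemma t_mult: "t1 x \<or> t3 x \<Longrightarrow> t1 y \<or> t3 y \<Longrightarrow> t1 (x * y) \<or> t3 (x * y)"
  unfolding t1_def t3_def hq_mult_sel by auto

lemma odd_mod4: "odd (n::int) \<Longrightarrow> n mod 4 = 1 \<or> n mod 4 = 3"
  by presburger

lemma odd_pow_prod: "odd p \<Longrightarrow> odd l \<Longrightarrow> odd ((p::int) ^ r * l ^ s)"
  by simp

context
  fixes p l :: int
  assumes podd: "odd p" and lodd: "odd l"
begin

lemma Gt_iff: "x \<in> Gamma_tilde p l \<longleftrightarrow> (\<exists>r s::nat. qnorm x = p ^ r * l ^ s) \<and> (t1 x \<or> t3 x)"
proof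
  assume x: "x \<in> Gamma_tilde p l"
  then obtain r s :: nat where rs: "qnorm x = p ^ r * l ^ s" unfolding Gamma_tilde_def by blast
  then have "odd (qnorm x)" using podd lodd by simp
  then have "qnorm x mod 4 = 1 \<or> qnorm x mod 4 = 3" by (rule odd_mod4)
  then have "t1 x \<or> t3 x" using x unfolding Gamma_tilde_def t1_def t3_def by auto
  with rs show "(\<exists>r s::nat. qnorm x = p ^ r * l ^ s) \<and> (t1 x \<or> t3 x)" by blast
next
  assume H: "(\<exists>r s::nat. qnorm x = p ^ r * l ^ s) \<and> (t1 x \<or> t3 x)"
  then show "x \<in> Gamma_tilde p l"
    unfolding Gamma_tilde_def using t1_mod4[of x] t3_mod4[of x] by (auto simp: t1_def t3_def)
qed

lemma Gt_mult: assumes "x \<in> Gamma_tilde p l" "y \<in> Gamma_tilde p l" shows "x * y \<in> Gamma_tilde p l"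
proof -
  obtain r s :: nat where 1: "qnorm x = p ^ r * l ^ s" using assms(1) Gt_iff by blast
  obtain r' s' :: nat where 2: "qnorm y = p ^ r' * l ^ s'" using assms(2) Gt_iff by blast
  have "qnorm (x * y) = p ^ (r + r') * l ^ (s + s')" using 1 2 by (simp add: qnorm_mult power_add)
  moreover have "t1 (x * y) \<or> t3 (x * y)" using t_mult assms Gt_iff by blast
  ultimately show ?thesis using Gt_iff by blast
qed

lemma Gt_conj: "x \<in> Gamma_tilde p l \<Longrightarrow> qconj x \<in> Gamma_tilde p l"
  unfolding Gt_iff by (simp add: t1_def t3_def)

lemma Gt_one: "1 \<in> Gamma_tilde p l"
proof -
  have "qnorm 1 = p ^ 0 * l ^ 0" by simp
  moreover have "t1 1" by (simp add: t1_def)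
  ultimately show ?thesis using Gt_iff by blast
qed

lemma Gt_pow: "x \<in> Gamma_tilde p l \<Longrightarrow> x ^ n \<in> Gamma_tilde p l"
  by (induct n) (auto simp: Gt_one Gt_mult)

lemma Gt_q0_odd: "x \<in> Gamma_tilde p l \<Longrightarrow> odd (q0 x)"
  unfolding Gt_iff t1_def t3_def by blast

lemma Gt_norm_odd: "x \<in> Gamma_tilde p l \<Longrightarrow> odd (qnorm x)"
  unfolding Gt_iff using podd lodd by auto

lemma Gt_vv_even: "x \<in> Gamma_tilde p l \<Longrightarrow> even (vv x)"
proof -
  assume x: "x \<in> Gamma_tilde p l"
  have "qnorm x = (q0 x)^2 + vv x" by (simp add: qnorm_def vv_def)
  then show ?thesis using Gt_q0_odd[OF x] Gt_norm_odd[OF x] by (auto simp: power2_eq_square)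
qed

lemma Gt_nz: "x \<in> Gamma_tilde p l \<Longrightarrow> x \<noteq> 0"
  using Gt_q0_odd by fastforce

lemma Gt_q0_nz: "x \<in> Gamma_tilde p l \<Longrightarrow> q0 x \<noteq> 0"
  using Gt_q0_odd by fastforce

end


lemma cls_def': "psi_class p l x = {y \<in> Gamma_tilde p l. qprop x y}"
  unfolding psi_class_def qprop_def qscale_eq by blast

lemma carrier_G: "carrier (Gamma_grp p l) = psi_class p l ` Gamma_tilde p l"
  by (simp add: Gamma_grp_def)

lemma mult_G: "A \<otimes>\<^bsub>Gamma_grp p l\<^esub> B = psi_class p l ((SOME x. x \<in> A) * (SOME y. y \<in> B))"
  by (simp add: Gamma_grp_def qmult_eq)

lemma one_G: "\<one>\<^bsub>Gamma_grp p l\<^esub> = psi_class p l 1"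
  by (simp add: Gamma_grp_def qone_eq)

lemma cls_self: "x \<in> Gamma_tilde p l \<Longrightarrow> x \<in> psi_class p l x"
  unfolding cls_def' by (simp add: qprop_refl)

lemma cls_eqI: "qprop x y \<Longrightarrow> psi_class p l x = psi_class p l y"
  unfolding cls_def' using qprop_trans qprop_sym by blast

lemma cls_eq_iff: "x \<in> Gamma_tilde p l \<Longrightarrow> psi_class p l x = psi_class p l y \<longleftrightarrow> qprop x y"
proof
  assume x: "x \<in> Gamma_tilde p l" and e: "psi_class p l x = psi_class p l y"
  have "x \<in> psi_class p l y" using cls_self[OF x] e by simp
  then show "qprop x y" unfolding cls_def' using qprop_sym by blast
qed (rule cls_eqI)

lemma some_cls: assumes "x \<in> Gamma_tilde p l"
  shows "(SOME z. z \<in> psi_class p l x) \<in> Gamma_tilde p l \<and> qprop x (SOME z. z \<in> psi_class p l x)"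
proof -
  have "(SOME z. z \<in> psi_class p l x) \<in> psi_class p l x" using cls_self[OF assms] by (rule someI)
  then show ?thesis unfolding cls_def' by blast
qed

lemma mult_cls: assumes "x \<in> Gamma_tilde p l" "y \<in> Gamma_tilde p l"
  shows "psi_class p l x \<otimes>\<^bsub>Gamma_grp p l\<^esub> psi_class p l y = psi_class p l (x * y)"
proof -
  have "qprop x (SOME z. z \<in> psi_class p l x)" "qprop y (SOME z. z \<in> psi_class p l y)"
    using some_cls assms by blast+
  then have "qprop (x * y) ((SOME z. z \<in> psi_class p l x) * (SOME z. z \<in> psi_class p l y))"
    by (rule qprop_mult)
  then show ?thesis unfolding mult_G by (rule cls_eqI[symmetric])
qed

context
  fixes p l :: int
  assumes podd: "odd p" and lodd: "odd l"
begin

lemma group_G: "group (Gamma_grp p l)"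
proof (rule groupI)
  fix A B assume "A \<in> carrier (Gamma_grp p l)" "B \<in> carrier (Gamma_grp p l)"
  then obtain x y where "x \<in> Gamma_tilde p l" "y \<in> Gamma_tilde p l" "A = psi_class p l x" "B = psi_class p l y"
    unfolding carrier_G by blast
  then show "A \<otimes>\<^bsub>Gamma_grp p l\<^esub> B \<in> carrier (Gamma_grp p l)"
    using mult_cls Gt_mult[OF podd lodd] carrier_G by simp
next
  show "\<one>\<^bsub>Gamma_grp p l\<^esub> \<in> carrier (Gamma_grp p l)" unfolding one_G carrier_G using Gt_one[OF podd lodd] by simp
next
  fix A B C assume "A \<in> carrier (Gamma_grp p l)" "B \<in> carrier (Gamma_grp p l)" "C \<in> carrier (Gamma_grp p l)"
  then obtain x y z where "x \<in> Gamma_tilde p l" "y \<in> Gamma_tilde p l" "z \<in> Gamma_tilde p l"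
    "A = psi_class p l x" "B = psi_class p l y" "C = psi_class p l z"
    unfolding carrier_G by blast
  then show "A \<otimes>\<^bsub>Gamma_grp p l\<^esub> B \<otimes>\<^bsub>Gamma_grp p l\<^esub> C = A \<otimes>\<^bsub>Gamma_grp p l\<^esub> (B \<otimes>\<^bsub>Gamma_grp p l\<^esub> C)"
    using mult_cls Gt_mult[OF podd lodd] by (simp add: mult.assoc)
next
  fix A assume "A \<in> carrier (Gamma_grp p l)"
  then obtain x where "x \<in> Gamma_tilde p l" "A = psi_class p l x" unfolding carrier_G by blast
  then show "\<one>\<^bsub>Gamma_grp p l\<^esub> \<otimes>\<^bsub>Gamma_grp p l\<^esub> A = A"
    unfolding one_G using mult_cls Gt_one[OF podd lodd] by simp
next
  fix A assume "A \<in> carrier (Gamma_grp p l)"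
  then obtain x where x: "x \<in> Gamma_tilde p l" "A = psi_class p l x" unfolding carrier_G by blast
  have "psi_class p l (qconj x) \<otimes>\<^bsub>Gamma_grp p l\<^esub> A = psi_class p l (of_int (qnorm x))"
    using x mult_cls Gt_conj[OF podd lodd] qconj_mult_self by simp
  also have "\<dots> = \<one>\<^bsub>Gamma_grp p l\<^esub>" unfolding one_G
    by (rule cls_eqI, rule qprop_of_int) (use x Gt_nz[OF podd lodd] qnorm_zero_iff in auto)
  finally show "\<exists>B\<in>carrier (Gamma_grp p l). B \<otimes>\<^bsub>Gamma_grp p l\<^esub> A = \<one>\<^bsub>Gamma_grp p l\<^esub>"
    using x Gt_conj[OF podd lodd] carrier_G by blast
qed

lemma cls_carrier: "x \<in> Gamma_tilde p l \<Longrightarrow> psi_class p l x \<in> carrier (Gamma_grp p l)"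
  unfolding carrier_G by simp

lemma inv_cls: assumes x: "x \<in> Gamma_tilde p l"
  shows "inv\<^bsub>Gamma_grp p l\<^esub> (psi_class p l x) = psi_class p l (qconj x)"
proof (rule group.inv_equality[OF group_G])
  have "psi_class p l (qconj x) \<otimes>\<^bsub>Gamma_grp p l\<^esub> psi_class p l x = psi_class p l (of_int (qnorm x))"
    using x mult_cls Gt_conj[OF podd lodd] qconj_mult_self by simp
  also have "\<dots> = \<one>\<^bsub>Gamma_grp p l\<^esub>" unfolding one_G
    by (rule cls_eqI, rule qprop_of_int) (use x Gt_nz[OF podd lodd] qnorm_zero_iff in auto)
  finally show "psi_class p l (qconj x) \<otimes>\<^bsub>Gamma_grp p l\<^esub> psi_class p l x = \<one>\<^bsub>Gamma_grp p l\<^esub>" .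
  show "psi_class p l x \<in> carrier (Gamma_grp p l)" using x by (rule cls_carrier)
  show "psi_class p l (qconj x) \<in> carrier (Gamma_grp p l)" using x Gt_conj[OF podd lodd] cls_carrier by blast
qed

lemma pow_cls: assumes x: "x \<in> Gamma_tilde p l"
  shows "psi_class p l x [^]\<^bsub>Gamma_grp p l\<^esub> (n::nat) = psi_class p l (x ^ n)"
proof (induct n)
  case 0 then show ?case by (simp add: one_G)
next
  case (Suc n)
  then show ?case using mult_cls[OF Gt_pow[OF podd lodd x] x] by (simp add: power_commutes)
qed

lemma cls_one_iff: assumes x: "x \<in> Gamma_tilde p l"
  shows "psi_class p l x = \<one>\<^bsub>Gamma_grp p l\<^esub> \<longleftrightarrow> scalar x"
  unfolding one_G cls_eq_iff[OF x] using scalar_qprop_one Gt_nz[OF podd lodd x] by simp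

end


lemma finite_norm_le: "finite {y :: hq. qnorm y \<le> B}"
proof -
  have "{y :: hq. qnorm y \<le> B} \<subseteq> (\<lambda>(a,b,c,d). HQ a b c d) ` ({-B..B} \<times> {-B..B} \<times> {-B..B} \<times> {-B..B})"
  proof
    fix y :: hq assume "y \<in> {y. qnorm y \<le> B}"
    then have n: "qnorm y \<le> B" by simp
    have b: "\<bar>t\<bar> \<le> B" if "t^2 \<le> B" for t :: int
    proof -
      have "\<bar>t\<bar> \<le> t^2"
      proof (cases "t = 0")
        case False
        then have "1 \<le> \<bar>t\<bar>" by simp
        then have "\<bar>t\<bar> * 1 \<le> \<bar>t\<bar> * \<bar>t\<bar>" by (intro mult_left_mono) auto
        then show ?thesis by (simp add: power2_eq_square abs_mult_self_eq)
      qed simp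
      with that show ?thesis by simp
    qed
    have nn: "0 \<le> (q0 y)^2" "0 \<le> (q1 y)^2" "0 \<le> (q2 y)^2" "0 \<le> (q3 y)^2" by simp_all
    have "(q0 y)^2 \<le> B" "(q1 y)^2 \<le> B" "(q2 y)^2 \<le> B" "(q3 y)^2 \<le> B"
      using n nn unfolding qnorm_def by linarith+
    then have "\<bar>q0 y\<bar> \<le> B" "\<bar>q1 y\<bar> \<le> B" "\<bar>q2 y\<bar> \<le> B" "\<bar>q3 y\<bar> \<le> B" using b by auto
    then show "y \<in> (\<lambda>(a,b,c,d). HQ a b c d) ` ({-B..B} \<times> {-B..B} \<times> {-B..B} \<times> {-B..B})"
      by (intro image_eqI[of _ _ "(q0 y, q1 y, q2 y, q3 y)"]) (auto simp: hq_eq_iff)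
  qed
  then show ?thesis by (rule finite_subset) simp
qed

lemma pigeon:
  assumes "finite S" "\<forall>k\<in>{1..card S + 1}. f k \<in> S"
  shows "\<exists>k1 k2. 1 \<le> k1 \<and> k1 < k2 \<and> k2 \<le> card S + 1 \<and> f k1 = f k2"
proof (rule ccontr)
  assume H: "\<not> ?thesis"
  have "inj_on f {1..card S + 1}"
  proof (rule inj_onI)
    fix x y assume "x \<in> {1..card S + 1}" "y \<in> {1..card S + 1}" "f x = f y"
    then show "x = y" using H by (metis atLeastAtMost_iff linorder_neqE_nat)
  qed
  then have "card (f ` {1..card S + 1}) = card S + 1" by (simp add: card_image)
  moreover have "f ` {1..card S + 1} \<subseteq> S" using assms(2) by blast
  then have "card (f ` {1..card S + 1}) \<le> card S" by (rule card_mono[OF assms(1)])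
  ultimately show False by simp
qed

context
  fixes p l :: int
  assumes pp: "Factorial_Ring.prime p" and lp: "Factorial_Ring.prime l" and pl: "p \<noteq> l"
begin

lemma vN_pl: "vN p (x::hq) = R" if "qnorm x = p ^ R * l ^ s"
proof -
  have "multiplicity p (p ^ R * l ^ s) = multiplicity p (p^R) + multiplicity p (l^s)"
    by (rule prime_elem_multiplicity_mult_distrib) (use pp lp in auto)
  also have "\<dots> = R" using pp lp pl p_nz[OF pp] p_not_unit[OF pp]
    by (simp add: multiplicity_distinct_prime_power multiplicity_same_power)
  finally show ?thesis using that by (simp add: vN_def)
qed

lemma reduce:
  assumes x: "x \<noteq> 0" and n: "qnorm x = p ^ R * l ^ s"
  shows "\<exists>y. qprop x y \<and> qnorm y = p ^ nat (DD p x) * l ^ s"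
proof -
  obtain y where y: "x = of_int (p ^ cnt p x) * y" "\<not> qdvd p y" by (rule cnt_decomp[OF pp x])
  have le: "2 * cnt p x \<le> R" using cnt_le_vN[OF pp x] vN_pl[OF n] by simp
  have "qnorm x = qnorm (of_int (p ^ cnt p x)) * qnorm y" by (subst y(1)) (simp only: qnorm_mult)
  then have "qnorm x = p ^ (2 * cnt p x) * qnorm y" by (simp only: qnorm_of_int power_mult[symmetric] mult.commute[of 2])
  moreover have "p ^ R = p ^ (2 * cnt p x) * p ^ (R - 2 * cnt p x)" using le by (simp flip: power_add)
  ultimately have "p ^ (2 * cnt p x) * qnorm y = p ^ (2 * cnt p x) * (p ^ (R - 2 * cnt p x) * l ^ s)"
    using n by (simp only: mult.assoc)
  moreover have "p ^ (2 * cnt p x) \<noteq> 0" using p_nz[OF pp] by simp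
  ultimately have "qnorm y = p ^ (R - 2 * cnt p x) * l ^ s" using p_nz[OF pp] by simp
  moreover have "nat (DD p x) = R - 2 * cnt p x"
  proof -
    have v: "vN p x = R" by (rule vN_pl[OF n])
    have "int R - 2 * int (cnt p x) = int (R - 2 * cnt p x)" using le by (simp add: of_nat_diff)
    then show ?thesis unfolding DD_def v by (simp only: nat_int)
  qed
  moreover have "qprop x y"
  proof -
    have "qprop (of_int (p ^ cnt p x) * y) y" by (rule qprop_of_int_left) (use p_nz[OF pp] in simp)
    then show ?thesis by (simp only: y(1)[symmetric])
  qed
  ultimately show ?thesis by auto
qed

end


lemma mult_qconj_assoc: "x * (qconj x * r) = of_int (qnorm x) * r"
  by (simp only: mult.assoc[symmetric] mult_qconj)

lemma qconj_mult_assoc: "qconj x * (x * r) = of_int (qnorm x) * r"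
  by (simp only: mult.assoc[symmetric] qconj_mult_self)

lemma qprop_scale_l: "c \<noteq> 0 \<Longrightarrow> qprop (of_int c * x) y \<longleftrightarrow> qprop x y"
  using qprop_of_int_left qprop_trans qprop_sym by blast

lemma qprop_scale_r: "c \<noteq> 0 \<Longrightarrow> qprop x (of_int c * y) \<longleftrightarrow> qprop x y"
  using qprop_of_int_left qprop_trans qprop_sym by blast

lemma qprop_mult_l: "qprop x y \<Longrightarrow> qprop (a * x) (a * y)"
  by (rule qprop_mult[OF qprop_refl])

lemma qprop_mult_r: "qprop x y \<Longrightarrow> qprop (x * a) (y * a)"
  by (rule qprop_mult[OF _ qprop_refl])

lemma qnorm_nz: "x \<noteq> 0 \<Longrightarrow> qnorm x \<noteq> 0"
  using qnorm_zero_iff by blast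

lemma pow_nz: "x \<noteq> 0 \<Longrightarrow> x ^ n \<noteq> (0::hq)"
proof (induct n)
  case 0 then show ?case by (simp add: hq_eq_iff)
next
  case (Suc n)
  have "x ^ Suc n = x * x ^ n" by simp
  then show ?case using mult_nz[OF Suc(2) Suc(1)[OF Suc(2)]] by simp
qed

lemma succ_replicate: "P s s \<Longrightarrow> successively P (replicate k s)"
proof (induct k)
  case (Suc k) then show ?case by (cases k) (auto simp: successively_Cons)
qed simp

lemma qconj_commute: "qconj x * y = y * qconj x \<Longrightarrow> x * y = y * x"
proof -
  assume h: "qconj x * y = y * qconj x"
  have x: "x = of_int (2 * q0 x) - qconj x" using add_qconj[of x] by (simp add: algebra_simps)
  have "x * y = of_int (2 * q0 x) * y - qconj x * y" by (subst x) (simp add: algebra_simps)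
  also have "\<dots> = y * of_int (2 * q0 x) - y * qconj x" by (simp only: h of_int_commute)
  also have "\<dots> = y * x" by (subst (2) x) (simp add: algebra_simps)
  finally show ?thesis .
qed

lemma pow_prop_one:
  assumes x: "x \<noteq> 0" and ab: "a < b" and pr: "qprop (x ^ a) (x ^ b)"
  shows "qprop (x ^ (b - a)) 1"
proof -
  have xb: "x ^ b = x ^ a * x ^ (b - a)" using ab by (simp flip: power_add)
  have "qprop (qconj (x ^ a) * x ^ a) (qconj (x ^ a) * x ^ b)" by (rule qprop_mult_l[OF pr])
  then have "qprop (of_int (qnorm (x ^ a))) (of_int (qnorm (x ^ a)) * x ^ (b - a))"
    unfolding xb by (simp only: qconj_mult_self qconj_mult_assoc)
  moreover have N: "qnorm (x ^ a) \<noteq> 0" using pow_nz[OF x] qnorm_nz by blast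
  ultimately have "qprop (of_int (qnorm (x ^ a)) * 1) (x ^ (b - a))" using qprop_scale_r by simp
  then have "qprop 1 (x ^ (b - a))" using qprop_scale_l[OF N] by blast
  then show ?thesis by (rule qprop_sym)
qed

lemma prodl_replicate: "prodl (replicate k x) = x ^ k"
  by (induct k) (simp_all add: prodl_simps)

context
  fixes p :: int
  assumes pp: "Factorial_Ring.prime p" and podd: "odd p"
begin

lemma GG_DD: "x \<noteq> 0 \<Longrightarrow> y \<noteq> 0 \<Longrightarrow> 2 * GG p x y = DD p x + DD p y - DD p (x * y)"
  using DD_mult[OF pp] by simp

lemma pow_GG: assumes s: "s \<noteq> 0" and D: "DD p s > 2 * GG p s s" and k: "k \<ge> 1"
  shows "GG p s (s ^ k) = GG p s s"
proof -
  have "prodl (replicate k s) \<noteq> 0 \<and> DD p (prodl (replicate k s)) \<ge> DD p (hd (replicate k s)) \<and>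
     (\<forall>y. y \<noteq> 0 \<longrightarrow> GG p y (hd (replicate k s)) \<le> GG p s s \<longrightarrow> GG p y (prodl (replicate k s)) = GG p y (hd (replicate k s)))"
  proof (rule pingpong[OF pp podd])
    show "replicate k s \<noteq> []" using k by simp
    show "\<forall>x\<in>set (replicate k s). x \<noteq> 0" using s by simp
    show "\<forall>x\<in>set (replicate k s). 2 * GG p s s < DD p x" using D by simp
    show "successively (\<lambda>a b. GG p a b \<le> GG p s s) (replicate k s)"
      by (rule succ_replicate) simp
  qed
  moreover have "hd (replicate k s) = s" using k by (cases k) auto
  ultimately show ?thesis using s by (simp add: prodl_replicate)
qed

lemma pow_exact: assumes s: "s \<noteq> 0" and D: "DD p s > 2 * GG p s s" and k: "k \<ge> 1"
  shows "DD p (s ^ k) = int k * (DD p s - 2 * GG p s s) + 2 * GG p s s"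
  using k
proof (induct k)
  case 0 then show ?case by simp
next
  case (Suc k)
  show ?case
  proof (cases "k = 0")
    case True then show ?thesis by simp
  next
    case False
    then have k1: "k \<ge> 1" by simp
    have "DD p (s ^ Suc k) = DD p (s * s ^ k)" by simp
    also have "\<dots> = DD p s + DD p (s ^ k) - 2 * GG p s (s ^ k)" by (rule DD_mult[OF pp s pow_nz[OF s]])
    also have "GG p s (s ^ k) = GG p s s" by (rule pow_GG[OF s D k1])
    finally show ?thesis using Suc(1)[OF k1] by (simp add: algebra_simps)
  qed
qed

lemma gp_pow: assumes s: "s \<noteq> 0" and E: "\<And>k. k \<ge> 1 \<Longrightarrow> DD p (s ^ k) = int k * t + 2 * C"
  and k: "1 \<le> k'" "k' < k"
  shows "gp p (s ^ k') (s ^ k) = int k' * t + C"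
proof -
  have sk: "s ^ k = s ^ k' * s ^ (k - k')" using k by (simp flip: power_add)
  have e: "qconj (s ^ k') * s ^ k = of_int (qnorm (s ^ k')) * s ^ (k - k')"
    unfolding sk by (rule qconj_mult_assoc)
  have N: "qnorm (s ^ k') \<noteq> 0" using pow_nz[OF s] qnorm_nz by blast
  have "DD p (qconj (s ^ k') * s ^ k) = DD p (s ^ (k - k'))"
    unfolding e by (rule DD_of_int_mult[OF pp N pow_nz[OF s]])
  also have "\<dots> = int (k - k') * t + 2 * C" using E k by simp
  finally have "2 * gp p (s ^ k') (s ^ k) = (int k' * t + 2 * C) + (int k * t + 2 * C) - (int (k - k') * t + 2 * C)"
    using gp_DD[OF pp podd pow_nz[OF s] pow_nz[OF s], of k' k] E k by simp
  then show ?thesis using k by (simp add: of_nat_diff algebra_simps)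
qed

end


lemma DER:
  assumes s: "s \<noteq> 0" and s': "s' \<noteq> 0" and b: "b \<noteq> 0" and k: "k1 < k2"
    and pr: "qprop (qconj (s ^ k1) * (b * s' ^ k1)) (qconj (s ^ k2) * (b * s' ^ k2))"
  shows "qprop (s ^ (k2 - k1) * b * qconj (s' ^ (k2 - k1))) b"
proof -
  define m where "m = k2 - k1"
  have sk: "s ^ k2 = s ^ m * s ^ k1" using k by (simp add: m_def flip: power_add)
  have sk': "s' ^ k2 = s' ^ m * s' ^ k1" using k by (simp add: m_def flip: power_add)
  have NA: "qnorm (s ^ k1) \<noteq> 0" using pow_nz[OF s] qnorm_nz by blast
  have NB: "qnorm (s' ^ k1) \<noteq> 0" using pow_nz[OF s'] qnorm_nz by blast
  have N2: "qnorm (s ^ k2) \<noteq> 0" using pow_nz[OF s] qnorm_nz by blast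
  have N2': "qnorm (s' ^ k2) \<noteq> 0" using pow_nz[OF s'] qnorm_nz by blast
  have "qprop (s ^ k2 * (qconj (s ^ k1) * (b * s' ^ k1)) * qconj (s' ^ k2))
              (s ^ k2 * (qconj (s ^ k2) * (b * s' ^ k2)) * qconj (s' ^ k2))"
    by (rule qprop_mult_r[OF qprop_mult_l[OF pr]])
  moreover have "s ^ k2 * (qconj (s ^ k1) * (b * s' ^ k1)) * qconj (s' ^ k2)
      = s ^ m * (of_int (qnorm (s ^ k1)) * (b * (of_int (qnorm (s' ^ k1)) * qconj (s' ^ m))))"
  proof -
    have "s ^ k2 * (qconj (s ^ k1) * (b * s' ^ k1)) * qconj (s' ^ k2)
        = s ^ m * (s ^ k1 * (qconj (s ^ k1) * (b * (s' ^ k1 * (qconj (s' ^ k1) * qconj (s' ^ m))))))"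
      unfolding sk sk' qconj_mult by (simp only: mult.assoc)
    then show ?thesis by (simp only: mult_qconj_assoc)
  qed
  moreover have "s ^ m * (of_int (qnorm (s ^ k1)) * (b * (of_int (qnorm (s' ^ k1)) * qconj (s' ^ m))))
      = of_int (qnorm (s ^ k1)) * (of_int (qnorm (s' ^ k1)) * (s ^ m * b * qconj (s' ^ m)))"
  proof -
    have "s ^ m * (of_int (qnorm (s ^ k1)) * (b * (of_int (qnorm (s' ^ k1)) * qconj (s' ^ m))))
        = s ^ m * (of_int (qnorm (s ^ k1)) * (of_int (qnorm (s' ^ k1)) * (b * qconj (s' ^ m))))"
      by (subst of_int_mult_comm_assoc[of b]) (rule refl)
    also have "\<dots> = of_int (qnorm (s ^ k1)) * (s ^ m * (of_int (qnorm (s' ^ k1)) * (b * qconj (s' ^ m))))"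
      by (rule of_int_mult_comm_assoc)
    also have "s ^ m * (of_int (qnorm (s' ^ k1)) * (b * qconj (s' ^ m))) = of_int (qnorm (s' ^ k1)) * (s ^ m * (b * qconj (s' ^ m)))"
      by (rule of_int_mult_comm_assoc)
    finally show ?thesis by (simp only: mult.assoc)
  qed
  moreover have "s ^ k2 * (qconj (s ^ k2) * (b * s' ^ k2)) * qconj (s' ^ k2)
      = of_int (qnorm (s ^ k2)) * (of_int (qnorm (s' ^ k2)) * b)"
  proof -
    have "s ^ k2 * (qconj (s ^ k2) * (b * s' ^ k2)) * qconj (s' ^ k2)
        = s ^ k2 * (qconj (s ^ k2) * (b * (s' ^ k2 * qconj (s' ^ k2))))"
      by (simp only: mult.assoc)
    also have "\<dots> = of_int (qnorm (s ^ k2)) * (b * of_int (qnorm (s' ^ k2)))"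
      by (simp only: mult_qconj_assoc mult_qconj)
    finally show ?thesis by (simp only: of_int_commute[of "qnorm (s' ^ k2)" b])
  qed
  ultimately have "qprop (of_int (qnorm (s ^ k1)) * (of_int (qnorm (s' ^ k1)) * (s ^ m * b * qconj (s' ^ m))))
      (of_int (qnorm (s ^ k2)) * (of_int (qnorm (s' ^ k2)) * b))" by simp
  then show ?thesis unfolding m_def[symmetric]
    using qprop_scale_l[OF NA] qprop_scale_l[OF NB] qprop_scale_r[OF N2] qprop_scale_r[OF N2'] by simp
qed

context
  fixes p l :: int
  assumes podd: "odd p" and lodd: "odd l"
begin

lemma REL1:
  assumes s: "s \<in> Gamma_tilde p l" and b: "b \<in> Gamma_tilde p l" and m: "m \<ge> 1"
    and R: "qprop (s ^ m * b * qconj (s ^ m)) b"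
  shows "s * b = b * s"
proof -
  have sm: "s ^ m \<in> Gamma_tilde p l" by (rule Gt_pow[OF podd lodd s])
  have N: "qnorm (s ^ m) \<noteq> 0" using Gt_nz[OF podd lodd sm] qnorm_nz by blast
  have "qprop (s ^ m * b * qconj (s ^ m) * s ^ m) (b * s ^ m)" by (rule qprop_mult_r[OF R])
  moreover have "s ^ m * b * qconj (s ^ m) * s ^ m = of_int (qnorm (s ^ m)) * (s ^ m * b)"
  proof -
    have "s ^ m * b * qconj (s ^ m) * s ^ m = (s ^ m * b) * (qconj (s ^ m) * s ^ m)" by (simp only: mult.assoc)
    also have "\<dots> = (s ^ m * b) * of_int (qnorm (s ^ m))" by (simp only: qconj_mult_self)
    finally show ?thesis by (simp only: of_int_commute[symmetric])
  qed
  ultimately have "qprop (s ^ m * b) (b * s ^ m)" using qprop_scale_l[OF N] by simp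
  then have "s ^ m * b = b * s ^ m"
    by (rule qprop_commute) (use Gt_q0_nz[OF podd lodd sm] Gt_q0_nz[OF podd lodd b] in auto)
  then show ?thesis by (rule pow_commute_imp[OF Gt_q0_odd[OF podd lodd s] Gt_vv_even[OF podd lodd s] m])
qed

lemma REL2:
  assumes s: "s \<in> Gamma_tilde p l" and b: "b \<in> Gamma_tilde p l" and m: "m \<ge> 1"
    and R: "qprop (s ^ m * b * s ^ m) b"
  shows "s * b = b * s"
proof -
  have sm: "s ^ m \<in> Gamma_tilde p l" by (rule Gt_pow[OF podd lodd s])
  have bb: "b * b \<in> Gamma_tilde p l" by (rule Gt_mult[OF podd lodd b b])
  have N: "qnorm (s ^ m) \<noteq> 0" using Gt_nz[OF podd lodd sm] qnorm_nz by blast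
  have "qprop (s ^ m * b * s ^ m * qconj (s ^ m)) (b * qconj (s ^ m))" by (rule qprop_mult_r[OF R])
  moreover have "s ^ m * b * s ^ m * qconj (s ^ m) = of_int (qnorm (s ^ m)) * (s ^ m * b)"
  proof -
    have "s ^ m * b * s ^ m * qconj (s ^ m) = (s ^ m * b) * (s ^ m * qconj (s ^ m))" by (simp only: mult.assoc)
    also have "\<dots> = (s ^ m * b) * of_int (qnorm (s ^ m))" by (simp only: mult_qconj)
    finally show ?thesis by (simp only: of_int_commute[symmetric])
  qed
  ultimately have R1: "qprop (s ^ m * b) (b * qconj (s ^ m))" using qprop_scale_l[OF N] by simp
  have "qprop (qconj (s ^ m) * (s ^ m * b * s ^ m)) (qconj (s ^ m) * b)" by (rule qprop_mult_l[OF R])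
  moreover have "qconj (s ^ m) * (s ^ m * b * s ^ m) = of_int (qnorm (s ^ m)) * (b * s ^ m)"
    by (simp only: mult.assoc qconj_mult_assoc)
  ultimately have R2: "qprop (b * s ^ m) (qconj (s ^ m) * b)" using qprop_scale_l[OF N] by simp
  have "qprop (s ^ m * b * b) (b * qconj (s ^ m) * b)" by (rule qprop_mult_r[OF R1])
  moreover have "qprop (b * (qconj (s ^ m) * b)) (b * (b * s ^ m))" by (rule qprop_mult_l[OF qprop_sym[OF R2]])
  ultimately have "qprop (s ^ m * (b * b)) ((b * b) * s ^ m)"
    using qprop_trans by (simp add: mult.assoc)
  then have "s ^ m * (b * b) = (b * b) * s ^ m"
    by (rule qprop_commute) (use Gt_q0_nz[OF podd lodd sm] Gt_q0_nz[OF podd lodd bb] in auto)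
  then have "s * (b * b) = (b * b) * s"
    by (rule pow_commute_imp[OF Gt_q0_odd[OF podd lodd s] Gt_vv_even[OF podd lodd s] m])
  then have eq2: "b ^ 2 * s = s * b ^ 2" by (simp add: power2_eq_square)
  have two: "(2::nat) \<ge> 1" by simp
  have "b * s = s * b"
    by (rule pow_commute_imp[OF Gt_q0_odd[OF podd lodd b] Gt_vv_even[OF podd lodd b] two eq2])
  then show ?thesis by simp
qed

end


lemma scalar_of_int: "scalar x \<Longrightarrow> x = of_int (q0 x)"
  by (simp add: scalar_def hq_eq_iff)

definition Lt :: "hq \<Rightarrow> hq \<Rightarrow> bool \<times> bool \<Rightarrow> hq" where
  "Lt U b c = (if fst c then (if snd c then U else qconj U) else (if snd c then b * U * qconj b else b * qconj U * qconj b))"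

lemma conjV: "qconj (b * Xq * qconj b) = b * qconj Xq * qconj b"
  by (simp add: qconj_mult mult.assoc)

lemma VV: "(b * Xq * qconj b) * (b * Yq * qconj b) = of_int (qnorm b) * (b * (Xq * Yq) * qconj b)"
proof -
  have "(b * Xq * qconj b) * (b * Yq * qconj b) = b * (Xq * ((qconj b * b) * (Yq * qconj b)))"
    by (simp only: mult.assoc)
  also have "\<dots> = b * (Xq * (of_int (qnorm b) * (Yq * qconj b)))" by (simp only: qconj_mult_self)
  also have "Xq * (of_int (qnorm b) * (Yq * qconj b)) = of_int (qnorm b) * (Xq * (Yq * qconj b))"
    by (rule of_int_mult_comm_assoc)
  also have "b * (of_int (qnorm b) * (Xq * (Yq * qconj b))) = of_int (qnorm b) * (b * (Xq * (Yq * qconj b)))"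
    by (rule of_int_mult_comm_assoc)
  finally show ?thesis by (simp only: mult.assoc)
qed

context
  fixes p l :: int and al be :: hq and r s :: nat
  assumes pp: "Factorial_Ring.prime p" and lp: "Factorial_Ring.prime l" and pl: "p \<noteq> l"
    and podd: "odd p" and lodd: "odd l"
    and aG: "al \<in> Gamma_tilde p l" and an: "qnorm al = p ^ r" and ans: "\<not> scalar al"
    and bG: "be \<in> Gamma_tilde p l" and bn: "qnorm be = l ^ s" and nc: "al * be \<noteq> be * al"
begin

lemma a_nz: "al \<noteq> 0" using Gt_nz[OF podd lodd aG] .
lemma b_nz: "be \<noteq> 0" using Gt_nz[OF podd lodd bG] .

lemma b_unit: "\<not> p dvd qnorm be"
proof
  assume "p dvd qnorm be"
  then have "p dvd l" using bn pp by (simp add: prime_dvd_power_iff) (metis prime_dvd_power)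
  then show False using primes_dvd_imp_eq[OF pp lp] pl by blast
qed

lemma bc_unit: "\<not> p dvd qnorm (qconj be)" using b_unit by simp

lemma no_pow_commute: "n \<ge> 1 \<Longrightarrow> al ^ n * be = be * al ^ n \<Longrightarrow> False"
  using pow_commute_imp[OF Gt_q0_odd[OF podd lodd aG] Gt_vv_even[OF podd lodd aG]] nc by blast

lemma norm_pow_a: "qnorm (al ^ n) = p ^ (r * n) * l ^ 0"
  by (simp add: qnorm_power an power_mult)

lemma growth: "\<exists>N0 \<ge> 1. DD p (al ^ (2 * N0)) > DD p (al ^ N0)"
proof (rule ccontr)
  assume "\<not> ?thesis"
  then have H: "\<And>N. N \<ge> 1 \<Longrightarrow> DD p (al ^ (2 * N)) \<le> DD p (al ^ N)" by (meson not_le)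
  have le: "DD p (al ^ (2 ^ j)) \<le> DD p al" for j
  proof (induct j)
    case (Suc j)
    have "al ^ (2 ^ Suc j) = al ^ (2 * 2 ^ j)" by simp
    moreover have "DD p (al ^ (2 * 2 ^ j)) \<le> DD p (al ^ (2 ^ j))" by (rule H) simp
    ultimately show ?case using Suc by simp
  qed simp
  define B where "B = p ^ nat (DD p al)"
  define S where "S = {y :: hq. qnorm y \<le> B}"
  have finS: "finite S" unfolding S_def by (rule finite_norm_le)
  have ex: "\<exists>y. qprop (al ^ (2 ^ j)) y \<and> y \<in> S" for j
  proof -
    obtain y where y: "qprop (al ^ (2 ^ j)) y" "qnorm y = p ^ nat (DD p (al ^ (2 ^ j))) * l ^ 0"
      using reduce[OF pp lp pl pow_nz[OF a_nz] norm_pow_a] by blast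
    have "nat (DD p (al ^ (2 ^ j))) \<le> nat (DD p al)" using le[of j] by simp
    then have "p ^ nat (DD p (al ^ (2 ^ j))) \<le> p ^ nat (DD p al)"
      using prime_gt_1_int[OF pp] by (intro power_increasing) auto
    then have "y \<in> S" using y(2) unfolding S_def B_def by simp
    with y(1) show ?thesis by blast
  qed
  define f where "f j = (SOME y. qprop (al ^ (2 ^ j)) y \<and> y \<in> S)" for j
  have f: "qprop (al ^ (2 ^ j)) (f j) \<and> f j \<in> S" for j
    unfolding f_def by (rule someI_ex[OF ex])
  obtain k1 k2 where k: "1 \<le> k1" "k1 < k2" "f k1 = f k2"
    using pigeon[OF finS, of f] f by blast
  have pr: "qprop (al ^ (2 ^ k1)) (al ^ (2 ^ k2))"
    using f[of k1] f[of k2] k(3) qprop_trans qprop_sym by metis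
  have lt: "2 ^ k1 < (2::nat) ^ k2" using k(2) by simp
  have "qprop (al ^ (2 ^ k2 - 2 ^ k1)) 1" by (rule pow_prop_one[OF a_nz lt pr])
  then have "scalar (al ^ (2 ^ k2 - 2 ^ k1))" using scalar_qprop_one pow_nz[OF a_nz] by blast
  moreover have "\<not> scalar (al ^ (2 ^ k2 - 2 ^ k1))"
    by (rule pow_nonscalar[OF Gt_q0_odd[OF podd lodd aG] Gt_vv_even[OF podd lodd aG] _ ans]) (use lt in linarith)
  ultimately show False by simp
qed


lemma mu_facts:
  fixes N0 :: nat
  assumes N0: "N0 \<ge> 1" and g: "DD p (al ^ (2 * N0)) > DD p (al ^ N0)"
  defines "mu \<equiv> al ^ N0"
  defines "C0 \<equiv> GG p mu mu"
  defines "tau \<equiv> DD p mu - 2 * C0"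
  shows "mu \<in> Gamma_tilde p l" "qconj mu \<in> Gamma_tilde p l" "qnorm mu = p ^ (r * N0)"
    "qnorm (qconj mu) = p ^ (r * N0)" "tau \<ge> 1" "C0 \<ge> 0"
    "\<And>k. k \<ge> 1 \<Longrightarrow> DD p (mu ^ k) = int k * tau + 2 * C0"
    "\<And>k. k \<ge> 1 \<Longrightarrow> DD p (qconj mu ^ k) = int k * tau + 2 * C0"
proof -
  show muG: "mu \<in> Gamma_tilde p l" unfolding mu_def by (rule Gt_pow[OF podd lodd aG])
  show "qconj mu \<in> Gamma_tilde p l" by (rule Gt_conj[OF podd lodd muG])
  show "qnorm mu = p ^ (r * N0)" unfolding mu_def by (simp add: qnorm_power an power_mult)
  then show "qnorm (qconj mu) = p ^ (r * N0)" by simp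
  have mu0: "mu \<noteq> 0" using Gt_nz[OF podd lodd muG] .
  have "mu * mu = al ^ (2 * N0)" unfolding mu_def by (simp add: mult_2 power_add)
  then have D2: "DD p (al ^ (2 * N0)) = 2 * DD p mu - 2 * C0" using DD_mult[OF pp mu0 mu0] C0_def by simp
  have Dg: "DD p mu > 2 * C0" using g D2 mu_def by simp
  then show "tau \<ge> 1" unfolding tau_def by simp
  show "C0 \<ge> 0" unfolding C0_def by (rule GG_nonneg[OF pp mu0 mu0])
  show "\<And>k. k \<ge> 1 \<Longrightarrow> DD p (mu ^ k) = int k * tau + 2 * C0"
    using pow_exact[OF pp podd mu0] Dg unfolding tau_def C0_def by simp
  have mc0: "qconj mu \<noteq> 0" using qconj_nz[OF mu0] .
  have "DD p (qconj mu * qconj mu) = DD p (mu * mu)" by (simp add: qconj_mult[symmetric] DD_conj[OF pp])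
  then have GGc: "GG p (qconj mu) (qconj mu) = C0"
    using GG_DD[OF pp podd mc0 mc0] GG_DD[OF pp podd mu0 mu0] unfolding C0_def by (simp add: DD_conj[OF pp])
  have Dgc: "DD p (qconj mu) > 2 * GG p (qconj mu) (qconj mu)" using Dg GGc by (simp add: DD_conj[OF pp])
  show "\<And>k. k \<ge> 1 \<Longrightarrow> DD p (qconj mu ^ k) = int k * tau + 2 * C0"
    using pow_exact[OF pp podd mc0 Dgc] GGc unfolding tau_def by (simp add: DD_conj[OF pp])
qed


lemma sg_facts:
  fixes N0 :: nat
  assumes N0: "N0 \<ge> 1" and g: "DD p (al ^ (2 * N0)) > DD p (al ^ N0)"
    and sg: "sg \<in> {al ^ N0, qconj (al ^ N0)}"
  shows "sg \<in> Gamma_tilde p l" "sg \<noteq> 0" "qnorm sg = p ^ (r * N0)"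
    "\<And>k. k \<ge> 1 \<Longrightarrow> DD p (sg ^ k) = int k * (DD p (al ^ N0) - 2 * GG p (al ^ N0) (al ^ N0)) + 2 * GG p (al ^ N0) (al ^ N0)"
    "sg * be = be * sg \<Longrightarrow> False"
proof -
  note F = mu_facts[OF N0 g]
  show G: "sg \<in> Gamma_tilde p l" using sg F by auto
  then show "sg \<noteq> 0" by (rule Gt_nz[OF podd lodd])
  show "qnorm sg = p ^ (r * N0)" using sg F by auto
  show "\<And>k. k \<ge> 1 \<Longrightarrow> DD p (sg ^ k) = int k * (DD p (al ^ N0) - 2 * GG p (al ^ N0) (al ^ N0)) + 2 * GG p (al ^ N0) (al ^ N0)"
    using sg F by auto
  show "sg * be = be * sg \<Longrightarrow> False"
  proof -
    assume c: "sg * be = be * sg"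
    have "al ^ N0 * be = be * al ^ N0"
    proof (cases "sg = al ^ N0")
      case True then show ?thesis using c by simp
    next
      case False
      then have "sg = qconj (al ^ N0)" using sg by auto
      then show ?thesis using c qconj_commute by simp
    qed
    then show False by (rule no_pow_commute[OF N0])
  qed
qed

lemma claimB:
  fixes N0 M :: nat
  assumes N0: "N0 \<ge> 1" and g: "DD p (al ^ (2 * N0)) > DD p (al ^ N0)"
    and sg: "sg \<in> {al ^ N0, qconj (al ^ N0)}" and sg': "sg' \<in> {al ^ N0, qconj (al ^ N0)}"
    and M: "M > card {y. qnorm y \<le> p ^ nat (2 * GG p (al ^ N0) (al ^ N0)) * l ^ s} + 1"
  shows "gp p (sg ^ M) (be * sg' ^ M) \<le>
    int (card {y. qnorm y \<le> p ^ nat (2 * GG p (al ^ N0) (al ^ N0)) * l ^ s} + 1) *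
      (DD p (al ^ N0) - 2 * GG p (al ^ N0) (al ^ N0)) + GG p (al ^ N0) (al ^ N0)"
proof -
  define mu where "mu = al ^ N0"
  define C0 where "C0 = GG p mu mu"
  define tau where "tau = DD p mu - 2 * C0"
  define S2 where "S2 = {y :: hq. qnorm y \<le> p ^ nat (2 * C0) * l ^ s}"
  define K where "K = card S2 + 1"
  note F = mu_facts[OF N0 g, folded mu_def, folded C0_def, folded tau_def]
  note A = sg_facts[OF N0 g sg, folded mu_def, folded C0_def, folded tau_def]
  note B = sg_facts[OF N0 g sg', folded mu_def, folded C0_def, folded tau_def]
  have MK: "M > K" using M unfolding K_def S2_def C0_def mu_def .
  have finS: "finite S2" unfolding S2_def by (rule finite_norm_le)
  show ?thesis unfolding mu_def[symmetric] C0_def[symmetric] tau_def[symmetric] S2_def[symmetric] K_def[symmetric]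
  proof (rule ccontr)
    assume "\<not> gp p (sg ^ M) (be * sg' ^ M) \<le> int K * tau + C0"
    then have big: "gp p (sg ^ M) (be * sg' ^ M) > int K * tau + C0" by simp
    define ek where "ek k = qconj (sg ^ k) * (be * sg' ^ k)" for k
    have sk0: "sg ^ k \<noteq> 0" for k using pow_nz[OF A(2)] .
    have sk0': "sg' ^ k \<noteq> 0" for k using pow_nz[OF B(2)] .
    have bk0: "be * sg' ^ k \<noteq> 0" for k using mult_nz[OF b_nz sk0'] .
    have Dk: "DD p (ek k) \<le> 2 * C0" if k: "1 \<le> k" "k \<le> K" for k
    proof -
      have kM: "k < M" using k MK by simp
      have g1: "gp p (sg ^ k) (sg ^ M) = int k * tau + C0" by (rule gp_pow[OF pp podd A(2) A(4) k(1) kM])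
      have "gp p (be * sg' ^ M) (be * sg' ^ k) = gp p (sg' ^ M) (sg' ^ k)"
        by (rule gp_unit_both[OF pp podd b_unit sk0' sk0'])
      also have "\<dots> = gp p (sg' ^ k) (sg' ^ M)" by (rule gp_sym[OF pp podd])
      also have "\<dots> = int k * tau + C0" by (rule gp_pow[OF pp podd B(2) B(4) k(1) kM])
      finally have g3: "gp p (be * sg' ^ M) (be * sg' ^ k) = int k * tau + C0" .
      have h1: "gp p (sg ^ k) (be * sg' ^ M) \<ge> min (gp p (sg ^ k) (sg ^ M)) (gp p (sg ^ M) (be * sg' ^ M))"
        by (rule hyp0[OF pp podd sk0 sk0 bk0])
      have h2: "gp p (sg ^ k) (be * sg' ^ k) \<ge> min (gp p (sg ^ k) (be * sg' ^ M)) (gp p (be * sg' ^ M) (be * sg' ^ k))"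
        by (rule hyp0[OF pp podd sk0 bk0 bk0])
      have "int k * tau \<le> int K * tau" using k F(5) by (intro mult_right_mono) auto
      then have gk: "gp p (sg ^ k) (be * sg' ^ k) \<ge> int k * tau + C0" using h1 h2 g1 g3 big by linarith
      have "DD p (ek k) = DD p (sg ^ k) + DD p (be * sg' ^ k) - 2 * gp p (sg ^ k) (be * sg' ^ k)"
        using gp_DD[OF pp podd sk0 bk0] unfolding ek_def by simp
      also have "DD p (be * sg' ^ k) = DD p (sg' ^ k)" by (rule DD_unit_left[OF pp podd b_unit sk0'])
      finally have "DD p (ek k) = DD p (sg ^ k) + DD p (sg' ^ k) - 2 * gp p (sg ^ k) (be * sg' ^ k)" .
      then show ?thesis using gk A(4)[OF k(1)] B(4)[OF k(1)] by linarith
    qed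
    have nk: "qnorm (ek k) = p ^ (2 * (r * N0 * k)) * l ^ s" for k
    proof -
      have "qnorm (ek k) = (p ^ (r * N0)) ^ k * (l ^ s * (p ^ (r * N0)) ^ k)"
        unfolding ek_def by (simp only: qnorm_mult qnorm_power A(3) B(3) bn qnorm_conj)
      also have "\<dots> = p ^ (r * N0 * k) * (l ^ s * p ^ (r * N0 * k))" by (simp only: power_mult)
      also have "p ^ (2 * (r * N0 * k)) = p ^ (r * N0 * k) * p ^ (r * N0 * k)" by (simp only: mult_2 power_add)
      ultimately show ?thesis by (simp only: ac_simps)
    qed
    have ex: "\<exists>y. qprop (ek k) y \<and> y \<in> S2" if k: "1 \<le> k" "k \<le> K" for k
    proof -
      have e0: "ek k \<noteq> 0" unfolding ek_def using mult_nz[OF qconj_nz[OF sk0] bk0] .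
      obtain y where y: "qprop (ek k) y" "qnorm y = p ^ nat (DD p (ek k)) * l ^ s"
        using reduce[OF pp lp pl e0 nk] by blast
      have "nat (DD p (ek k)) \<le> nat (2 * C0)" using Dk[OF k] by simp
      then have "p ^ nat (DD p (ek k)) \<le> p ^ nat (2 * C0)"
        using prime_gt_1_int[OF pp] by (intro power_increasing) auto
      then have "qnorm y \<le> p ^ nat (2 * C0) * l ^ s" using y(2) prime_gt_1_int[OF lp]
        by (simp add: mult_right_mono)
      then have "y \<in> S2" unfolding S2_def by simp
      with y(1) show ?thesis by blast
    qed
    define f where "f k = (SOME y. qprop (ek k) y \<and> y \<in> S2)" for k
    have f: "qprop (ek k) (f k) \<and> f k \<in> S2" if "1 \<le> k" "k \<le> K" for k
      unfolding f_def by (rule someI_ex[OF ex[OF that]])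
    have "\<forall>k\<in>{1..card S2 + 1}. f k \<in> S2" using f unfolding K_def by auto
    then obtain k1 k2 where k: "1 \<le> k1" "k1 < k2" "k2 \<le> card S2 + 1" "f k1 = f k2"
      using pigeon[OF finS, of f] by blast
    have "qprop (ek k1) (ek k2)"
      using f[of k1] f[of k2] k qprop_trans qprop_sym unfolding K_def by (metis le_trans less_imp_le)
    then have R: "qprop (sg ^ (k2 - k1) * be * qconj (sg' ^ (k2 - k1))) be"
      unfolding ek_def by (rule DER[OF A(2) B(2) b_nz k(2)])
    have m1: "k2 - k1 \<ge> 1" using k(2) by simp
    have "sg * be = be * sg"
    proof (cases "sg' = sg")
      case True
      then show ?thesis using REL1[OF podd lodd A(1) bG m1] R by simp
    next
      case False
      then have "sg' = qconj sg" using sg sg' by auto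
      then have "qconj (sg' ^ (k2 - k1)) = sg ^ (k2 - k1)" by (simp add: qconj_power[symmetric])
      then show ?thesis using REL2[OF podd lodd A(1) bG m1] R by simp
    qed
    then show False by (rule A(5))
  qed
qed


lemma DD_conjb: "Xq \<noteq> 0 \<Longrightarrow> DD p (be * Xq * qconj be) = DD p Xq"
proof -
  assume Xq: "Xq \<noteq> 0"
  have "DD p (be * Xq * qconj be) = DD p (be * Xq)" by (rule DD_unit_right[OF pp podd bc_unit mult_nz[OF b_nz Xq]])
  also have "\<dots> = DD p Xq" by (rule DD_unit_left[OF pp podd b_unit Xq])
  finally show ?thesis .
qed

lemma conjb_nz: "Xq \<noteq> 0 \<Longrightarrow> be * Xq * qconj be \<noteq> 0"
  using mult_nz[OF mult_nz[OF b_nz] qconj_nz[OF b_nz]] by blast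

lemma core: "\<exists>n \<ge> 1. \<forall>w. w \<noteq> [] \<longrightarrow> reduced_word w \<longrightarrow> \<not> scalar (prodl (map (Lt (al ^ n) be) w))"
proof -
  obtain N0 where N0: "N0 \<ge> 1" and g: "DD p (al ^ (2 * N0)) > DD p (al ^ N0)" using growth by blast
  define mu where "mu = al ^ N0"
  define C0 where "C0 = GG p mu mu"
  define tau where "tau = DD p mu - 2 * C0"
  define S2 where "S2 = {y :: hq. qnorm y \<le> p ^ nat (2 * C0) * l ^ s}"
  define K where "K = card S2 + 1"
  define M where "M = 2 * K + 1"
  define C where "C = int K * tau + C0"
  note F = mu_facts[OF N0 g, folded mu_def, folded C0_def, folded tau_def]
  have MK: "M > card {y. qnorm y \<le> p ^ nat (2 * GG p (al ^ N0) (al ^ N0)) * l ^ s} + 1"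
    unfolding M_def K_def S2_def C0_def mu_def by simp
  have cross: "gp p (sg ^ M) (be * sg' ^ M) \<le> C" if "sg \<in> {mu, qconj mu}" "sg' \<in> {mu, qconj mu}" for sg sg'
    using claimB[OF N0 g _ _ MK, of sg sg'] that
    unfolding C_def K_def S2_def tau_def C0_def mu_def by simp
  define U where "U = mu ^ M"
  have mu0: "mu \<noteq> 0" using Gt_nz[OF podd lodd F(1)] .
  have U0: "U \<noteq> 0" unfolding U_def by (rule pow_nz[OF mu0])
  have Uc: "qconj U = qconj mu ^ M" unfolding U_def by (rule qconj_power)
  have Uc0: "qconj U \<noteq> 0" using qconj_nz[OF U0] .
  have M1: "M \<ge> 1" unfolding M_def by simp
  have DU: "DD p U = int M * tau + 2 * C0" unfolding U_def by (rule F(7)[OF M1])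
  have DUc: "DD p (qconj U) = int M * tau + 2 * C0" using DU by (simp add: DD_conj[OF pp])
  have C0C: "C0 \<le> C" unfolding C_def using F(5) by simp
  have C0pos: "C \<ge> 0" unfolding C_def using F(5) F(6) by simp
  have big: "int M * tau + 2 * C0 > 2 * C" unfolding C_def M_def using F(5) by (simp add: algebra_simps)
  have GUU: "GG p U U = C0"
  proof -
    have "U * U = mu ^ (2 * M)" unfolding U_def by (simp add: mult_2 power_add)
    moreover have "2 * M \<ge> 1" using M1 by simp
    ultimately have "DD p (U * U) = int (2 * M) * tau + 2 * C0" using F(7)[of "2 * M"] by simp
    then show ?thesis using GG_DD[OF pp podd U0 U0] DU by (simp add: algebra_simps)
  qed
  have GUcUc: "GG p (qconj U) (qconj U) = C0"
  proof -
    have "qconj U * qconj U = qconj (U * U)" by (simp add: qconj_mult)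
    then have "DD p (qconj U * qconj U) = DD p (U * U)" by (simp add: DD_conj[OF pp])
    then show ?thesis using GG_DD[OF pp podd Uc0 Uc0] GG_DD[OF pp podd U0 U0] GUU DU DUc by simp
  qed
  have GVV: "GG p (be * Xq * qconj be) (be * Xq * qconj be) = GG p Xq Xq" if Xq: "Xq \<noteq> 0" for Xq
  proof -
    have XqXq: "Xq * Xq \<noteq> 0" using mult_nz[OF Xq Xq] .
    have Nb: "qnorm be \<noteq> 0" using b_nz qnorm_nz by blast
    have "DD p ((be * Xq * qconj be) * (be * Xq * qconj be)) = DD p (Xq * Xq)"
      unfolding VV using DD_of_int_mult[OF pp Nb conjb_nz[OF XqXq]] DD_conjb[OF XqXq] by simp
    then show ?thesis using GG_DD[OF pp podd conjb_nz[OF Xq] conjb_nz[OF Xq]] GG_DD[OF pp podd Xq Xq] DD_conjb[OF Xq]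
      by simp
  qed
  have Pc: "qconj Xq \<in> {U, qconj U}" if "Xq \<in> {U, qconj U}" for Xq using that by auto
  have PX: "\<exists>sg\<in>{mu, qconj mu}. Xq = sg ^ M" if "Xq \<in> {U, qconj U}" for Xq
    using that Uc U_def by auto
  have crossP: "gp p Xq (be * Yq) \<le> C" if "Xq \<in> {U, qconj U}" "Yq \<in> {U, qconj U}" for Xq Yq
    using PX[OF that(1)] PX[OF that(2)] cross by blast
  have P0: "Xq \<noteq> 0" if "Xq \<in> {U, qconj U}" for Xq using that U0 Uc0 by auto
  have G1: "GG p Xq (be * Yq * qconj be) \<le> C" if "Xq \<in> {U, qconj U}" "Yq \<in> {U, qconj U}" for Xq Yq
  proof -
    have "GG p Xq (be * Yq * qconj be) = gp p (qconj Xq) (be * Yq * qconj be)" by (rule GG_gp)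
    also have "\<dots> = gp p (qconj Xq) (be * Yq)"
      by (rule gp_unit_right[OF pp podd bc_unit qconj_nz[OF P0[OF that(1)]] mult_nz[OF b_nz P0[OF that(2)]]])
    finally show ?thesis using crossP[OF Pc[OF that(1)] that(2)] by simp
  qed
  have G2: "GG p (be * Yq * qconj be) Xq \<le> C" if "Xq \<in> {U, qconj U}" "Yq \<in> {U, qconj U}" for Xq Yq
  proof -
    have "GG p (be * Yq * qconj be) Xq = gp p (be * qconj Yq * qconj be) Xq" by (simp add: GG_gp conjV)
    also have "\<dots> = gp p Xq (be * qconj Yq * qconj be)" by (rule gp_sym[OF pp podd])
    also have "\<dots> = gp p Xq (be * qconj Yq)"
      by (rule gp_unit_right[OF pp podd bc_unit P0[OF that(1)] mult_nz[OF b_nz qconj_nz[OF P0[OF that(2)]]]])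
    finally show ?thesis using crossP[OF that(1) Pc[OF that(2)]] by simp
  qed
  have Lt_cases: "Lt U be c \<in> {U, qconj U} \<or> (\<exists>Yq \<in> {U, qconj U}. Lt U be c = be * Yq * qconj be)" for c
    unfolding Lt_def by auto
  have Lt0: "Lt U be c \<noteq> 0" for c
    unfolding Lt_def using U0 Uc0 conjb_nz[OF U0] conjb_nz[OF Uc0] by auto
  have LtD: "DD p (Lt U be c) > 2 * C" for c
    unfolding Lt_def using DU DUc DD_conjb[OF U0] DD_conjb[OF Uc0] big by auto
  have succ: "GG p (Lt U be c) (Lt U be d) \<le> C" if cd: "\<not> (fst c = fst d \<and> snd c \<noteq> snd d)" for c d
  proof (cases c, cases d)
    fix c1 c2 d1 d2 assume c: "c = (c1, c2)" and d: "d = (d1, d2)"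
    have UP: "U \<in> {U, qconj U}" "qconj U \<in> {U, qconj U}" by auto
    show ?thesis
    proof (cases c1; cases d1)
      assume "c1" "d1"
      then have "c2 = d2" using cd c d by simp
      then show ?thesis using c d \<open>c1\<close> \<open>d1\<close> GUU GUcUc C0C by (cases c2) (auto simp: Lt_def)
    next
      assume "\<not> c1" "\<not> d1"
      then have "c2 = d2" using cd c d by simp
      then show ?thesis using c d \<open>\<not> c1\<close> \<open>\<not> d1\<close> GUU GUcUc C0C GVV[OF U0] GVV[OF Uc0]
        by (cases c2) (auto simp: Lt_def)
    next
      assume "c1" "\<not> d1"
      then show ?thesis using c d G1[OF UP(1) UP(1)] G1[OF UP(1) UP(2)] G1[OF UP(2) UP(1)] G1[OF UP(2) UP(2)]
        by (cases c2; cases d2) (auto simp: Lt_def)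
    next
      assume "\<not> c1" "d1"
      then show ?thesis using c d G2[OF UP(1) UP(1)] G2[OF UP(1) UP(2)] G2[OF UP(2) UP(1)] G2[OF UP(2) UP(2)]
        by (cases c2; cases d2) (auto simp: Lt_def)
    qed
  qed
  have Un: "al ^ (N0 * M) = U" unfolding U_def mu_def by (simp add: power_mult)
  have "\<forall>w. w \<noteq> [] \<longrightarrow> reduced_word w \<longrightarrow> \<not> scalar (prodl (map (Lt U be) w))"
  proof (intro allI impI)
    fix w :: "(bool \<times> bool) list" assume w: "w \<noteq> []" and rw: "reduced_word w"
    let ?xs = "map (Lt U be) w"
    have sx: "successively (\<lambda>a b. GG p a b \<le> C) ?xs"
      unfolding successively_map
      by (rule successively_mono[OF rw[unfolded reduced_word_def]]) (use succ in auto)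
    have PP: "prodl ?xs \<noteq> 0 \<and> DD p (prodl ?xs) \<ge> DD p (hd ?xs) \<and>
      (\<forall>y. y \<noteq> 0 \<longrightarrow> GG p y (hd ?xs) \<le> C \<longrightarrow> GG p y (prodl ?xs) = GG p y (hd ?xs))"
      by (rule pingpong[OF pp podd]) (use w Lt0 LtD sx in auto)
    have "DD p (hd ?xs) > 2 * C" using LtD w by (cases w) auto
    then have pos: "DD p (prodl ?xs) > 0" using PP C0pos by linarith
    show "\<not> scalar (prodl ?xs)"
    proof
      assume sc: "scalar (prodl ?xs)"
      then have e: "prodl ?xs = of_int (q0 (prodl ?xs))" by (rule scalar_of_int)
      have "q0 (prodl ?xs) \<noteq> 0" using PP e by (metis of_int_0)
      then have "DD p (prodl ?xs) = 0" by (subst e) (rule DD_of_int[OF pp])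
      then show False using pos by simp
    qed
  qed
  moreover have "N0 * M \<ge> 1" using N0 M_def by simp
  ultimately show ?thesis using Un by metis
qed

end


lemma (in group) inv_commute_l: "z \<otimes> y = y \<otimes> z \<Longrightarrow> z \<in> carrier G \<Longrightarrow> y \<in> carrier G \<Longrightarrow> inv z \<otimes> y = y \<otimes> inv z"
proof -
  assume e: "z \<otimes> y = y \<otimes> z" and z: "z \<in> carrier G" and y: "y \<in> carrier G"
  have "inv z \<otimes> y = inv z \<otimes> y \<otimes> (z \<otimes> inv z)" using z y by simp
  also have "\<dots> = inv z \<otimes> (z \<otimes> y) \<otimes> inv z" using z y e by (simp add: m_assoc)
  also have "\<dots> = y \<otimes> inv z" using z y by (simp add: m_assoc[symmetric])
  finally show ?thesis .
qed

lemma (in group) int_pow_commute1: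
  assumes e: "x \<otimes> y = y \<otimes> x" and x: "x \<in> carrier G" and y: "y \<in> carrier G"
  shows "x [^] (i::int) \<otimes> y = y \<otimes> x [^] i"
proof (cases i rule: int_cases)
  case (nonneg n)
  then have "x [^] i = x [^] n" by (simp add: int_pow_int)
  then show ?thesis using group_commutes_pow[OF e x y, of n] by simp
next
  case (neg n)
  then have ei: "x [^] i = inv (x [^] (Suc n))" using int_pow_neg_int[OF x, of "Suc n"] by simp
  have "x [^] (Suc n) \<otimes> y = y \<otimes> x [^] (Suc n)" by (rule group_commutes_pow[OF e x y])
  then have "inv (x [^] (Suc n)) \<otimes> y = y \<otimes> inv (x [^] (Suc n))"
    by (rule inv_commute_l) (use x y in simp_all)
  then show ?thesis unfolding ei .
qed

lemma (in group) int_pow_commute: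
  assumes e: "x \<otimes> y = y \<otimes> x" and x: "x \<in> carrier G" and y: "y \<in> carrier G"
  shows "x [^] (i::int) \<otimes> y [^] (j::int) = y [^] j \<otimes> x [^] i"
proof -
  have e': "y \<otimes> x = x \<otimes> y" using e by simp
  have "y [^] j \<otimes> x = x \<otimes> y [^] j" by (rule int_pow_commute1[OF e' y x])
  then have e2: "x \<otimes> y [^] j = y [^] j \<otimes> x" by simp
  show ?thesis by (rule int_pow_commute1[OF e2 x int_pow_closed[OF y]])
qed

lemma (in group) Z2_iso:
  assumes a: "a \<in> carrier G" and b: "b \<in> carrier G" and ab: "a \<otimes> b = b \<otimes> a"
    and inj0: "\<And>(m::int) (n::int). a [^] m \<otimes> b [^] n = \<one> \<Longrightarrow> m = 0 \<and> n = 0"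
  shows "G\<lparr>carrier := generate G {a, b}\<rparr> \<cong> integer_group \<times>\<times> integer_group"
proof -
  define H where "H = generate G {a, b}"
  have sub: "subgroup H G" unfolding H_def by (rule generate_is_subgroup) (use a b in auto)
  have aH: "a \<in> H" "b \<in> H" unfolding H_def by (auto intro: generate.incl)
  define f where "f = (\<lambda>(m::int, n::int). a [^] m \<otimes> b [^] n)"
  have fH: "f x \<in> H" for x
    unfolding f_def using subgroup_int_pow_closed[OF sub aH(1)] subgroup_int_pow_closed[OF sub aH(2)]
      subgroup.m_closed[OF sub] by (auto split: prod.splits)
  have fmult: "f (m + m', n + n') = f (m, n) \<otimes> f (m', n')" for m m' n n'
  proof -
    have "f (m + m', n + n') = (a [^] m \<otimes> a [^] m') \<otimes> (b [^] n \<otimes> b [^] n')"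
      unfolding f_def using a b by (simp add: int_pow_mult)
    also have "\<dots> = a [^] m \<otimes> ((a [^] m' \<otimes> b [^] n) \<otimes> b [^] n')" using a b by (simp add: m_assoc)
    also have "a [^] m' \<otimes> b [^] n = b [^] n \<otimes> a [^] m'" by (rule int_pow_commute[OF ab a b])
    also have "a [^] m \<otimes> ((b [^] n \<otimes> a [^] m') \<otimes> b [^] n') = f (m, n) \<otimes> f (m', n')"
      unfolding f_def using a b by (simp add: m_assoc)
    finally show ?thesis .
  qed
  have hom: "f \<in> hom (integer_group \<times>\<times> integer_group) (G\<lparr>carrier := H\<rparr>)"
    unfolding hom_def using fH fmult by (auto simp: DirProd_def integer_group_def)
  have inj: "inj f"
  proof (rule injI)
    fix x y assume e: "f x = f y"
    obtain m n where x: "x = (m, n)" by (cases x)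
    obtain m' n' where y: "y = (m', n')" by (cases y)
    have "f (m - m', n - n') \<otimes> f (m', n') = f (m, n)" using fmult[of "m - m'" m' "n - n'" n'] by simp
    also have "\<dots> = f (m', n')" using e x y by simp
    finally have fe: "f (m - m', n - n') \<otimes> f (m', n') = f (m', n')" .
    have c1: "f (m', n') \<in> carrier G" using fH[of "(m', n')"] subgroup.mem_carrier[OF sub] by blast
    have c2: "f (m - m', n - n') \<in> carrier G" using fH[of "(m - m', n - n')"] subgroup.mem_carrier[OF sub] by blast
    have "f (m - m', n - n') = \<one>" using fe r_cancel_one[OF c1 c2] by simp
    then have "a [^] (m - m') \<otimes> b [^] (n - n') = \<one>" unfolding f_def by simp
    then have "m - m' = 0 \<and> n - n' = 0" using inj0[of "m - m'" "n - n'"] by blast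
    then show "x = y" using x y by simp
  qed
  have surj: "H \<subseteq> range f"
  proof
    fix h assume "h \<in> H"
    then show "h \<in> range f" unfolding H_def
    proof (induction rule: generate.induct)
      case one then show ?case by (rule range_eqI[of _ _ "(0, 0)"]) (simp add: f_def)
    next
      case (incl h)
      then show ?case
      proof
        assume "h = a" then show ?thesis using a by (intro range_eqI[of _ _ "(1, 0)"]) (simp add: f_def)
      next
        assume "h \<in> {b}" then show ?thesis using b by (intro range_eqI[of _ _ "(0, 1)"]) (simp add: f_def)
      qed
    next
      case (inv h)
      then show ?case
      proof
        assume "h = a" then show ?thesis using a by (intro range_eqI[of _ _ "(- 1, 0)"]) (simp add: f_def int_pow_neg)
      next
        assume "h \<in> {b}" then show ?thesis using b by (intro range_eqI[of _ _ "(0, - 1)"]) (simp add: f_def int_pow_neg)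
      qed
    next
      case (eng h1 h2)
      then obtain x1 x2 where "h1 = f x1" "h2 = f x2" by blast
      then show ?case using fmult[of "fst x1" "fst x2" "snd x1" "snd x2"]
        by (intro range_eqI[of _ _ "(fst x1 + fst x2, snd x1 + snd x2)"]) simp
    qed
  qed
  have "bij_betw f (carrier (integer_group \<times>\<times> integer_group)) (carrier (G\<lparr>carrier := H\<rparr>))"
    unfolding bij_betw_def using inj fH surj by (auto simp: inj_on_def inj_def)
  then have "f \<in> iso (integer_group \<times>\<times> integer_group) (G\<lparr>carrier := H\<rparr>)"
    using hom unfolding iso_def by simp
  then have "integer_group \<times>\<times> integer_group \<cong> G\<lparr>carrier := H\<rparr>" by (rule is_isoI)
  then show ?thesis unfolding H_def
    by (rule group.iso_sym[OF DirProd_group[OF group_integer_group group_integer_group]])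
qed



definition ipow :: "hq \<Rightarrow> int \<Rightarrow> hq" where
  "ipow x m = (if 0 \<le> m then x ^ nat m else qconj x ^ nat (- m))"

lemma scalar_conj: "scalar (qconj x) \<longleftrightarrow> scalar x" by (simp add: scalar_def)

context
  fixes p l :: int
  assumes podd: "odd p" and lodd: "odd l"
begin

lemma gen_rep:
  assumes T: "T \<subseteq> Gamma_tilde p l" "\<forall>x\<in>T. qnorm x = q"
    and h: "h \<in> generate (Gamma_grp p l) (psi_class p l ` T)"
  shows "\<exists>x \<in> Gamma_tilde p l. h = psi_class p l x \<and> (\<exists>k::nat. qnorm x = q ^ k)"
  using h
proof (induction rule: generate.induct)
  case one
  show ?case by (rule bexI[of _ 1]) (auto simp: one_G Gt_one[OF podd lodd] intro: exI[of _ 0])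
next
  case (incl h)
  then obtain x where "x \<in> T" "h = psi_class p l x" by blast
  then show ?case using T by (intro bexI[of _ x]) (auto intro: exI[of _ 1])
next
  case (inv h)
  then obtain x where x: "x \<in> T" "h = psi_class p l x" by blast
  then have xG: "x \<in> Gamma_tilde p l" using T by blast
  show ?case using x T inv_cls[OF podd lodd xG] Gt_conj[OF podd lodd xG]
    by (intro bexI[of _ "qconj x"]) (auto intro: exI[of _ 1])
next
  case (eng h1 h2)
  then obtain x1 x2 k1 k2 where "x1 \<in> Gamma_tilde p l" "h1 = psi_class p l x1" "qnorm x1 = q ^ k1"
    "x2 \<in> Gamma_tilde p l" "h2 = psi_class p l x2" "qnorm x2 = q ^ k2" by blast
  then show ?case using mult_cls[of x1 p l x2] Gt_mult[OF podd lodd]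
    by (intro bexI[of _ "x1 * x2"]) (auto simp: qnorm_mult power_add intro: exI[of _ "k1 + k2"])
qed

lemma ipow_cls: assumes x: "x \<in> Gamma_tilde p l"
  shows "psi_class p l x [^]\<^bsub>Gamma_grp p l\<^esub> (m::int) = psi_class p l (ipow x m)"
proof (cases "0 \<le> m")
  case True then show ?thesis unfolding ipow_def int_pow_def2 using pow_cls[OF podd lodd x] by simp
next
  case False
  have "inv\<^bsub>Gamma_grp p l\<^esub> (psi_class p l (x ^ nat (- m))) = psi_class p l (qconj (x ^ nat (- m)))"
    by (rule inv_cls[OF podd lodd Gt_pow[OF podd lodd x]])
  then show ?thesis using False unfolding ipow_def int_pow_def2 using pow_cls[OF podd lodd x]
    by (simp add: qconj_power)
qed

lemma ipow_Gt: "x \<in> Gamma_tilde p l \<Longrightarrow> ipow x m \<in> Gamma_tilde p l"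
  unfolding ipow_def using Gt_pow[OF podd lodd] Gt_conj[OF podd lodd] by auto

lemma ipow_norm: "qnorm (ipow x m) = qnorm x ^ nat \<bar>m\<bar>"
  unfolding ipow_def by (simp add: qnorm_power)

lemma torsion: assumes x: "x \<in> Gamma_tilde p l" and ns: "\<not> scalar x" and sc: "scalar (ipow x m)"
  shows "m = 0"
proof (rule ccontr)
  assume m: "m \<noteq> 0"
  show False
  proof (cases "0 \<le> m")
    case True
    then have "scalar (x ^ nat m)" using sc by (simp add: ipow_def)
    moreover have "\<not> scalar (x ^ nat m)"
      by (rule pow_nonscalar[OF Gt_q0_odd[OF podd lodd x] Gt_vv_even[OF podd lodd x] _ ns]) (use m True in simp)
    ultimately show False by simp
  next
    case False
    have xc: "qconj x \<in> Gamma_tilde p l" by (rule Gt_conj[OF podd lodd x])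
    have "scalar (qconj x ^ nat (- m))" using sc False by (simp add: ipow_def)
    moreover have "\<not> scalar (qconj x ^ nat (- m))"
      by (rule pow_nonscalar[OF Gt_q0_odd[OF podd lodd xc] Gt_vv_even[OF podd lodd xc] _])
        (use m False ns scalar_conj in auto)
    ultimately show False by simp
  qed
qed

end

context
  fixes p l :: int
  assumes pp: "Factorial_Ring.prime p" and lp: "Factorial_Ring.prime l" and pl: "p \<noteq> l"
    and podd: "odd p" and lodd: "odd l"
begin

lemma DD0_scalar: assumes x: "x \<in> Gamma_tilde p l" and n: "qnorm x = p ^ R" and D: "DD p x = 0"
  shows "scalar x"
proof -
  have x0: "x \<noteq> 0" by (rule Gt_nz[OF podd lodd x])
  obtain y where y: "x = of_int (p ^ cnt p x) * y" "\<not> qdvd p y" by (rule cnt_decomp[OF pp x0])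
  have n': "qnorm x = p ^ R * l ^ 0" using n by simp
  have vR: "vN p x = R" by (rule vN_pl[OF pp lp pl n'])
  then have R: "R = 2 * cnt p x" using D unfolding DD_def by simp
  have "qnorm x = qnorm (of_int (p ^ cnt p x)) * qnorm y" by (subst y(1)) (simp only: qnorm_mult)
  then have "qnorm x = p ^ (2 * cnt p x) * qnorm y" by (simp only: qnorm_of_int power_mult[symmetric] mult.commute[of 2])
  then have "p ^ R * 1 = p ^ R * qnorm y" using n R by simp
  moreover have "p ^ R \<noteq> 0" using p_nz[OF pp] by simp
  ultimately have ny: "qnorm y = 1" using mult_left_cancel[of "p ^ R" 1 "qnorm y"] by simp
  have "q0 x = p ^ cnt p x * q0 y" by (subst y(1)) (simp del: of_int_power)
  then have "odd (q0 y)" using Gt_q0_odd[OF podd lodd x] by auto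
  then have "q0 y \<noteq> 0" by auto
  then have a1: "1 \<le> \<bar>q0 y\<bar>" by simp
  then have "1 * 1 \<le> \<bar>q0 y\<bar> * \<bar>q0 y\<bar>" by (intro mult_mono) auto
  then have "(q0 y)^2 \<ge> 1" by (simp add: power2_eq_square abs_mult_self_eq)
  then have "(q1 y)^2 + (q2 y)^2 + (q3 y)^2 = 0" using ny unfolding qnorm_def
    by (smt (verit) zero_le_power2)
  then have "q1 y = 0 \<and> q2 y = 0 \<and> q3 y = 0" by (simp add: add_nonneg_eq_0_iff)
  moreover have "q1 x = p ^ cnt p x * q1 y" by (subst y(1)) (simp del: of_int_power)
  moreover have "q2 x = p ^ cnt p x * q2 y" by (subst y(1)) (simp del: of_int_power)
  moreover have "q3 x = p ^ cnt p x * q3 y" by (subst y(1)) (simp del: of_int_power)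
  ultimately show ?thesis unfolding scalar_def by simp
qed

end


context
  fixes p l :: int
  assumes podd: "odd p" and lodd: "odd l"
begin

lemma Lt_Gt: "U \<in> Gamma_tilde p l \<Longrightarrow> b \<in> Gamma_tilde p l \<Longrightarrow> Lt U b c \<in> Gamma_tilde p l"
  unfolding Lt_def using Gt_mult[OF podd lodd] Gt_conj[OF podd lodd] by auto

lemma prodl_Gt: "\<forall>x\<in>set xs. x \<in> Gamma_tilde p l \<Longrightarrow> prodl xs \<in> Gamma_tilde p l"
  by (induct xs) (auto simp: prodl_simps Gt_one[OF podd lodd] Gt_mult[OF podd lodd])

lemma word_val_cls:
  assumes U: "U \<in> Gamma_tilde p l" and b: "b \<in> Gamma_tilde p l"
  shows "word_val (Gamma_grp p l) (psi_class p l U) (psi_class p l (b * U * qconj b)) w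
           = psi_class p l (prodl (map (Lt U b) w))"
proof (induct w)
  case Nil then show ?case by (simp add: word_val_def prodl_simps one_G)
next
  case (Cons c w)
  have bUb: "b * U * qconj b \<in> Gamma_tilde p l" using Gt_mult[OF podd lodd] Gt_conj[OF podd lodd] U b by blast
  have lv: "letter_val (Gamma_grp p l) (psi_class p l U) (psi_class p l (b * U * qconj b)) c = psi_class p l (Lt U b c)"
    unfolding letter_val_def Lt_def Let_def
    using inv_cls[OF podd lodd U] inv_cls[OF podd lodd bUb] conjV[of b U] by auto
  have pG: "prodl (map (Lt U b) w) \<in> Gamma_tilde p l" using prodl_Gt Lt_Gt[OF U b] by auto
  have "word_val (Gamma_grp p l) (psi_class p l U) (psi_class p l (b * U * qconj b)) (c # w)
      = letter_val (Gamma_grp p l) (psi_class p l U) (psi_class p l (b * U * qconj b)) c \<otimes>\<^bsub>Gamma_grp p l\<^esub>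
        word_val (Gamma_grp p l) (psi_class p l U) (psi_class p l (b * U * qconj b)) w"
    by (simp add: word_val_def)
  also have "\<dots> = psi_class p l (Lt U b c * prodl (map (Lt U b) w))"
    unfolding lv Cons by (rule mult_cls[OF Lt_Gt[OF U b] pG])
  finally show ?case by (simp add: prodl_simps)
qed

end

lemma not_dvd_pow_other: "Factorial_Ring.prime p \<Longrightarrow> Factorial_Ring.prime l \<Longrightarrow> p \<noteq> l \<Longrightarrow> \<not> p dvd (l::int) ^ k"
  by (metis prime_dvd_power primes_dvd_imp_eq)

theorem corollary2p8:
  fixes p l :: int and a b :: "hq set"
  assumes "Factorial_Ring.prime p" and "Factorial_Ring.prime l" and "odd p" and "odd l" and "p \<noteq> l"
    and "a \<in> Gamma_p p l" and "a \<noteq> \<one>\<^bsub>Gamma_grp p l\<^esub>"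
    and "b \<in> Gamma_l p l" and "b \<noteq> \<one>\<^bsub>Gamma_grp p l\<^esub>"
  shows "(Gamma_grp p l)\<lparr>carrier := generate (Gamma_grp p l) {a, b}\<rparr>
           \<cong> integer_group \<times>\<times> integer_group
         \<or> contains_free_rank2 (Gamma_grp p l) (generate (Gamma_grp p l) {a, b})"
proof -
  note pp = assms(1) and lp = assms(2) and podd = assms(3) and lodd = assms(4) and pl = assms(5)
  let ?G = "Gamma_grp p l"
  have grp: "group ?G" by (rule group_G[OF podd lodd])
  have AT: "A_tilde p l \<subseteq> Gamma_tilde p l" "\<forall>x\<in>A_tilde p l. qnorm x = p" unfolding A_tilde_def by auto
  have BT: "B_tilde p l \<subseteq> Gamma_tilde p l" "\<forall>x\<in>B_tilde p l. qnorm x = l" unfolding B_tilde_def by auto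
  obtain al r where aG: "al \<in> Gamma_tilde p l" and ae: "a = psi_class p l al" and an: "qnorm al = p ^ r"
    using gen_rep[OF podd lodd AT] assms(6) unfolding Gamma_p_def by blast
  obtain be s where bG: "be \<in> Gamma_tilde p l" and bE: "b = psi_class p l be" and bn: "qnorm be = l ^ s"
    using gen_rep[OF podd lodd BT] assms(8) unfolding Gamma_l_def by blast
  have ans: "\<not> scalar al" using assms(7) cls_one_iff[OF podd lodd aG] ae by simp
  have bns: "\<not> scalar be" using assms(9) cls_one_iff[OF podd lodd bG] bE by simp
  have aC: "a \<in> carrier ?G" using ae cls_carrier[OF podd lodd aG] by simp
  have bC: "b \<in> carrier ?G" using bE cls_carrier[OF podd lodd bG] by simp
  show ?thesis
  proof (cases "al * be = be * al")
    case True
    have ab: "a \<otimes>\<^bsub>?G\<^esub> b = b \<otimes>\<^bsub>?G\<^esub> a"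
      unfolding ae bE mult_cls[OF aG bG] mult_cls[OF bG aG] True ..
    have inj0: "m = 0 \<and> n = 0" if e: "a [^]\<^bsub>?G\<^esub> (m::int) \<otimes>\<^bsub>?G\<^esub> b [^]\<^bsub>?G\<^esub> (n::int) = \<one>\<^bsub>?G\<^esub>" for m n
    proof -
      have am: "ipow al m \<in> Gamma_tilde p l" by (rule ipow_Gt[OF podd lodd aG])
      have bm: "ipow be n \<in> Gamma_tilde p l" by (rule ipow_Gt[OF podd lodd bG])
      have pG: "ipow al m * ipow be n \<in> Gamma_tilde p l" by (rule Gt_mult[OF podd lodd am bm])
      have "psi_class p l (ipow al m * ipow be n) = \<one>\<^bsub>?G\<^esub>"
        using e unfolding ae bE ipow_cls[OF podd lodd aG] ipow_cls[OF podd lodd bG] mult_cls[OF am bm] .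
      then have sc: "scalar (ipow al m * ipow be n)" using cls_one_iff[OF podd lodd pG] by simp
      have nz: "ipow al m * ipow be n \<noteq> 0" using Gt_nz[OF podd lodd pG] .
      have "DD p (ipow al m * ipow be n) = 0"
        using DD_of_int[OF pp, of "q0 (ipow al m * ipow be n)"] scalar_of_int[OF sc] nz by (metis of_int_0)
      moreover have "\<not> p dvd qnorm (ipow be n)" unfolding ipow_norm[OF podd lodd] bn
        using not_dvd_pow_other[OF pp lp pl] by (simp add: power_mult[symmetric])
      ultimately have "DD p (ipow al m) = 0"
        using DD_unit_right[OF pp podd _ Gt_nz[OF podd lodd am]] by simp
      moreover have "qnorm (ipow al m) = p ^ (r * nat \<bar>m\<bar>)" unfolding ipow_norm[OF podd lodd] an by (simp add: power_mult)
      ultimately have "scalar (ipow al m)" by (intro DD0_scalar[OF pp lp pl podd lodd am]) 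
      then have m0: "m = 0" by (rule torsion[OF podd lodd aG ans])
      then have "ipow al m * ipow be n = ipow be n" by (simp add: ipow_def)
      then have "scalar (ipow be n)" using sc by simp
      then have "n = 0" by (rule torsion[OF podd lodd bG bns])
      with m0 show ?thesis by simp
    qed
    have "?G\<lparr>carrier := generate ?G {a, b}\<rparr> \<cong> integer_group \<times>\<times> integer_group"
      by (rule group.Z2_iso[OF grp aC bC ab inj0])
    then show ?thesis by simp
  next
    case False
    obtain n where n1: "n \<ge> 1" and nw: "\<forall>w. w \<noteq> [] \<longrightarrow> reduced_word w \<longrightarrow> \<not> scalar (prodl (map (Lt (al ^ n) be) w))"
      using core[OF pp lp pl podd lodd aG an ans bG bn False] by blast
    define U where "U = al ^ n"
    have UG: "U \<in> Gamma_tilde p l" unfolding U_def by (rule Gt_pow[OF podd lodd aG])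
    define u where "u = a [^]\<^bsub>?G\<^esub> n"
    define v where "v = b \<otimes>\<^bsub>?G\<^esub> u \<otimes>\<^bsub>?G\<^esub> inv\<^bsub>?G\<^esub> b"
    have ue: "u = psi_class p l U" unfolding u_def ae U_def by (rule pow_cls[OF podd lodd aG])
    have ve: "v = psi_class p l (be * U * qconj be)"
      unfolding v_def ue bE inv_cls[OF podd lodd bG]
      using mult_cls[OF bG UG] mult_cls[OF Gt_mult[OF podd lodd bG UG] Gt_conj[OF podd lodd bG]] by simp
    have uH: "u \<in> generate ?G {a, b}" unfolding u_def
    proof (induct n)
      case 0 then show ?case by (simp add: generate.one)
    next
      case (Suc n) then show ?case by (simp add: generate.eng generate.incl)
    qed
    have vH: "v \<in> generate ?G {a, b}" unfolding v_def
      by (intro generate.eng uH generate.incl generate.inv) auto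
    have "free_pair ?G u v"
      unfolding free_pair_def
    proof (intro allI impI)
      fix w assume w: "w \<noteq> [] \<and> reduced_word w"
      have pG: "prodl (map (Lt U be) w) \<in> Gamma_tilde p l" using prodl_Gt[OF podd lodd] Lt_Gt[OF podd lodd UG bG] by auto
      have "word_val ?G u v w = psi_class p l (prodl (map (Lt U be) w))"
        unfolding ue ve by (rule word_val_cls[OF podd lodd UG bG])
      moreover have "\<not> scalar (prodl (map (Lt U be) w))" using nw w unfolding U_def by blast
      ultimately show "word_val ?G u v w \<noteq> \<one>\<^bsub>?G\<^esub>" using cls_one_iff[OF podd lodd pG] by simp
    qed
    then have "contains_free_rank2 ?G (generate ?G {a, b})"
      unfolding contains_free_rank2_def using uH vH by blast
    then show ?thesis by simp
  qed
qed



end
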